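(* Consider the conservation law $\partial_t u+\partial_x f(u)=0$, $u\in\mathbb{R}^N$, on a uniform grid over $\mathbb{R}$ with cells $I_k=[x_{k-\frac12},x_{k+\frac12}]$ of width $h$ and midpoints $w_k$, time levels $0=t^0<t^1<\cdots$ with $\Delta t^n=t^{n+1}-t^n$, and the fully discrete scheme $$u_k^{n+1}=u_k^n+\frac{\Delta t^n}{h}\big(f^n_{k-\frac12}-f^n_{k+\frac12}\big),\qquad f^n_{k+\frac12}=\sum_{l,m\in Z}A_{lm}\,\varphi_{lm}(u^n_{k+l},u^n_{k+m}),$$ where $p\ge1$, $Z=\{-p+1,\dots,p\}$, $A=(A_{lm})_{l,m\in Z}$ is a fixed real matrix with $A_{ll}=0$ and $\sum_{l,m\in Z}A_{lm}=1$, and $(\varphi_{lm})$ is the family $\varphi_{01}(a,b)=\alpha g(a,b)+(1-\alpha)\hat h(a,b)$, $\varphi_{10}(a,b)=\alpha g(b,a)+(1-\alpha)\hat h(a,b)$, $\varphi_{lm}=\hat h$ otherwise, with $\alpha\in[0,1]$ and $\hat h$, $g$ consistent Lipschitz continuous two-point fluxes. Let $u_h^n$ be the piecewise constant function equal to $u_k^n$ on $I_k$, and let $B_k=\{x\in\mathbb{R}:|x-w_k|\le 2p\,h\}$. Assume $$h\sum_k\max_{x\in B_k}|u_h^n(x)-u_h^n(w_k)|\to0\quad\text{as }h\to0,\ \text{for all }n\ge0.$$ If $u_h$ converges uniformly almost everywhere to some function $u$ as $\Delta t,h\to0$, then $u$ is a weak solution of $\partial_t u+\partial_x f(u)=0$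.
   Context: A two-point flux $\hat h:\mathbb{R}^N\times\mathbb{R}^N\to\mathbb{R}^N$ is consistent if $\hat h(a,a)=f(a)$. In the paper $\hat h$ is an entropy conservative symmetric two-point flux and $g$ an entropy dissipative two-point flux (e.g. Godunov), combined with weight $\alpha$; the theorem only uses that each member of the family is consistent and Lipschitz continuous. *)

theory Defs
  imports "HOL-Analysis.Analysis"
begin

definition stencil :: "nat \<Rightarrow> int set" where
  "stencil p = {- int p + 1 .. int p}"

definition flux_family ::
  "real \<Rightarrow> ('v::real_vector \<Rightarrow> 'v \<Rightarrow> 'v) \<Rightarrow> ('v \<Rightarrow> 'v \<Rightarrow> 'v) \<Rightarrow> int \<Rightarrow> int \<Rightarrow> 'v \<Rightarrow> 'v \<Rightarrow> 'v" where
  "flux_family \<alpha> hh g l m a b =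
     (if l = 0 \<and> m = 1 then \<alpha> *\<^sub>R g a b + (1 - \<alpha>) *\<^sub>R hh a b
      else if l = 1 \<and> m = 0 then \<alpha> *\<^sub>R g b a + (1 - \<alpha>) *\<^sub>R hh a b
      else hh a b)"

text \<open>Numerical flux f_{k+1/2} computed from the grid values V.\<close>
definition num_flux ::
  "nat \<Rightarrow> (int \<Rightarrow> int \<Rightarrow> real) \<Rightarrow> real \<Rightarrow> ('v::real_vector \<Rightarrow> 'v \<Rightarrow> 'v) \<Rightarrow> ('v \<Rightarrow> 'v \<Rightarrow> 'v)
    \<Rightarrow> (int \<Rightarrow> 'v) \<Rightarrow> int \<Rightarrow> 'v" where
  "num_flux p A \<alpha> hh g V k =
     (\<Sum>l\<in>stencil p. \<Sum>m\<in>stencil p. A l m *\<^sub>R flux_family \<alpha> hh g l m (V (k + l)) (V (k + m)))"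

text \<open>Uniform grid of width h with midpoints w_k = c + k h; cell I_k = [w_k - h/2, w_k + h/2).\<close>
definition midpt :: "real \<Rightarrow> real \<Rightarrow> int \<Rightarrow> real" where
  "midpt h c k = c + of_int k * h"

definition cell_index :: "real \<Rightarrow> real \<Rightarrow> real \<Rightarrow> int" where
  "cell_index h c x = \<lfloor>(x - c) / h + 1 / 2\<rfloor>"

text \<open>Time level index n with t^n <= t < t^(n+1) (for t >= 0).\<close>
definition time_index :: "(nat \<Rightarrow> real) \<Rightarrow> real \<Rightarrow> nat" where
  "time_index ts t = (LEAST n. t < ts (Suc n))"

definition piecewise_const ::
  "real \<Rightarrow> real \<Rightarrow> (nat \<Rightarrow> real) \<Rightarrow> (nat \<Rightarrow> int \<Rightarrow> 'v) \<Rightarrow> real \<times> real \<Rightarrow> 'v" where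
  "piecewise_const h c ts U z = U (time_index ts (snd z)) (cell_index h c (fst z))"

definition local_osc ::
  "nat \<Rightarrow> real \<Rightarrow> real \<Rightarrow> (nat \<Rightarrow> real) \<Rightarrow> (nat \<Rightarrow> int \<Rightarrow> 'v::real_normed_vector) \<Rightarrow> nat \<Rightarrow> int \<Rightarrow> real" where
  "local_osc p h c ts U n k =
     Max ((\<lambda>x. norm (piecewise_const h c ts U (x, ts n) - piecewise_const h c ts U (midpt h c k, ts n)))
          ` {x. \<bar>x - midpt h c k\<bar> \<le> 2 * real p * h})"

text \<open>C^1 test function with compact support in R x (0,infinity); phx, pht are its partial
  derivatives in x and t.\<close>
definition test_function ::
  "(real \<times> real \<Rightarrow> real) \<Rightarrow> (real \<times> real \<Rightarrow> real) \<Rightarrow> (real \<times> real \<Rightarrow> real) \<Rightarrow> bool" where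
  "test_function \<phi> phx pht \<longleftrightarrow>
     (\<forall>x t. ((\<lambda>y. \<phi> (y, t)) has_real_derivative phx (x, t)) (at x)) \<and>
     (\<forall>x t. ((\<lambda>s. \<phi> (x, s)) has_real_derivative pht (x, t)) (at t)) \<and>
     continuous_on UNIV phx \<and> continuous_on UNIV pht \<and>
     (\<exists>R \<delta> T. 0 < \<delta> \<and> (\<forall>x t. \<phi> (x, t) \<noteq> 0 \<longrightarrow> \<bar>x\<bar> \<le> R \<and> \<delta> \<le> t \<and> t \<le> T))"

definition weak_solution :: "('v::euclidean_space \<Rightarrow> 'v) \<Rightarrow> (real \<times> real \<Rightarrow> 'v) \<Rightarrow> bool" where
  "weak_solution f u \<longleftrightarrow>
     (\<forall>\<phi> phx pht. test_function \<phi> phx pht \<longrightarrow>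
        integrable lebesgue (\<lambda>z. pht z *\<^sub>R u z + phx z *\<^sub>R f (u z)) \<and>
        integral\<^sup>L lebesgue (\<lambda>z. pht z *\<^sub>R u z + phx z *\<^sub>R f (u z)) = 0)"

end

theory Submission
  imports Defs
begin

lemma cell_index_iff:
  assumes "h > 0"
  shows "cell_index h c x = k \<longleftrightarrow> midpt h c k - h/2 \<le> x \<and> x < midpt h c k + h/2"
proof -
  have "cell_index h c x = k \<longleftrightarrow> of_int k \<le> (x - c) / h + 1/2 \<and> (x - c) / h + 1/2 < of_int k + 1"
    unfolding cell_index_def by (simp add: floor_eq_iff)
  also have "\<dots> \<longleftrightarrow> midpt h c k - h/2 \<le> x \<and> x < midpt h c k + h/2"
    using assms unfolding midpt_def by (auto simp: field_simps)
  finally show ?thesis .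
qed

lemma cell_index_shift:
  assumes "h > 0"
  shows "cell_index h c (x + of_int l * h) = cell_index h c x + l"
proof -
  have "(x + of_int l * h - c) / h + 1/2 = ((x - c) / h + 1/2) + of_int l"
    using assms by (simp add: field_simps)
  then show ?thesis unfolding cell_index_def by (simp only: floor_add_int)
qed

lemma midpt_cell:
  assumes "h > 0"
  shows "\<bar>x - midpt h c (cell_index h c x)\<bar> \<le> h/2"
proof -
  have "midpt h c (cell_index h c x) - h/2 \<le> x \<and> x < midpt h c (cell_index h c x) + h/2"
    using cell_index_iff[OF assms, of c x "cell_index h c x"] by simp
  then show ?thesis unfolding abs_le_iff by linarith
qed

lemma time_index_props:
  assumes mono: "\<forall>n. ts n < ts (Suc n)" and t0: "ts 0 = 0"
    and unb: "filterlim ts at_top sequentially" and t: "0 \<le> t"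
  shows "ts (time_index ts t) \<le> t \<and> t < ts (Suc (time_index ts t))"
proof -
  have "\<forall>\<^sub>F n in sequentially. t < ts n" using unb by (simp add: filterlim_at_top_dense)
  then obtain n0 where "t < ts n0" by (auto simp: eventually_sequentially)
  moreover have "ts n0 \<le> ts (Suc n0)" using mono by (simp add: less_imp_le)
  ultimately have ex: "t < ts (Suc n0)" by simp
  have 1: "t < ts (Suc (time_index ts t))"
    unfolding time_index_def by (rule LeastI[of _ n0], rule ex)
  have 2: "ts (time_index ts t) \<le> t"
  proof (cases "time_index ts t")
    case 0 then show ?thesis using t0 t by simp
  next
    case (Suc m)
    have "\<not> t < ts (Suc m)"
      using not_less_Least[of m "\<lambda>n. t < ts (Suc n)"] Suc unfolding time_index_def by simp
    then show ?thesis using Suc by simp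
  qed
  show ?thesis using 1 2 by simp
qed

lemma time_index_iff:
  assumes mono: "\<forall>n. ts n < ts (Suc n)" and t0: "ts 0 = 0"
    and unb: "filterlim ts at_top sequentially" and t: "0 \<le> t"
  shows "time_index ts t = n \<longleftrightarrow> ts n \<le> t \<and> t < ts (Suc n)"
proof
  assume "time_index ts t = n" then show "ts n \<le> t \<and> t < ts (Suc n)"
    using time_index_props[OF assms] by simp
next
  assume a: "ts n \<le> t \<and> t < ts (Suc n)"
  have sm: "strict_mono ts" using mono by (simp add: strict_mono_Suc_iff)
  let ?m = "time_index ts t"
  have b: "ts ?m \<le> t \<and> t < ts (Suc ?m)" using time_index_props[OF assms] .
  show "?m = n"
  proof (rule ccontr)
    assume "?m \<noteq> n"
    then have "Suc ?m \<le> n \<or> Suc n \<le> ?m" by auto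
    then show False
    proof
      assume "Suc ?m \<le> n" then have "ts (Suc ?m) \<le> ts n" using sm by (simp add: strict_mono_less_eq)
      then show False using a b by simp
    next
      assume "Suc n \<le> ?m" then have "ts (Suc n) \<le> ts ?m" using sm by (simp add: strict_mono_less_eq)
      then show False using a b by simp
    qed
  qed
qed

lemma time_index_le:
  assumes "t < ts (Suc N)"
  shows "time_index ts t \<le> N"
  unfolding time_index_def by (rule Least_le, rule assms)

lemma meas_idx:
  fixes Q :: "nat \<Rightarrow> int \<Rightarrow> real \<times> real \<Rightarrow> 'b::topological_space"
  assumes Q: "\<And>n k. Q n k \<in> borel_measurable borel"
  shows "(\<lambda>z. Q (time_index ts (snd z)) (cell_index h c (fst z)) z) \<in> borel_measurable borel"
proof -
  have [measurable]: "snd \<in> borel_measurable (borel::(real\<times>real) measure)"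
    "fst \<in> borel_measurable (borel::(real\<times>real) measure)"
    by (intro borel_measurable_continuous_onI continuous_intros)+
  have tn: "(\<lambda>z::real\<times>real. time_index ts (snd z)) \<in> borel \<rightarrow>\<^sub>M count_space UNIV"
    unfolding time_index_def by measurable
  have ck: "(\<lambda>z::real\<times>real. cell_index h c (fst z)) \<in> borel \<rightarrow>\<^sub>M count_space UNIV"
    unfolding cell_index_def by measurable
  have inner: "(\<lambda>z. Q n (cell_index h c (fst z)) z) \<in> borel_measurable borel" for n
    by (rule measurable_compose_countable'[where f="\<lambda>k z. Q n k z" and I=UNIV, OF Q ck]) auto
  show ?thesis
    by (rule measurable_compose_countable'[where f="\<lambda>n z. Q n (cell_index h c (fst z)) z" and I=UNIV, OF inner tn]) auto
qed

lemma bounded_idx: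
  fixes Q :: "nat \<Rightarrow> int \<Rightarrow> 'b::real_normed_vector"
  assumes h: "h > 0" and unb: "filterlim ts at_top sequentially"
  shows "\<exists>M. \<forall>x t. \<bar>x\<bar> \<le> X \<longrightarrow> t \<le> T \<longrightarrow> norm (Q (time_index ts t) (cell_index h c x)) \<le> M"
proof -
  have "\<forall>\<^sub>F n in sequentially. T < ts n" using unb by (simp add: filterlim_at_top_dense)
  then obtain N0 where "\<forall>n\<ge>N0. T < ts n" by (auto simp: eventually_sequentially)
  then have N: "T < ts (Suc N0)" by simp
  define k0 where "k0 = \<lfloor>(- X - c) / h + 1/2\<rfloor>"
  define k1 where "k1 = \<lfloor>(X - c) / h + 1/2\<rfloor>"
  define S where "S = (\<lambda>(n,k). norm (Q n k)) ` ({..N0} \<times> {k0..k1})"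
  have fin: "finite S" unfolding S_def by simp
  show ?thesis
  proof (intro exI allI impI)
    fix x t assume x: "\<bar>x\<bar> \<le> X" and t: "t \<le> T"
    have "time_index ts t \<le> N0" using N t by (intro time_index_le) simp
    moreover have "k0 \<le> cell_index h c x" unfolding k0_def cell_index_def
      using x h by (intro floor_mono) (simp add: divide_right_mono)
    moreover have "cell_index h c x \<le> k1" unfolding k1_def cell_index_def
      using x h by (intro floor_mono) (simp add: divide_right_mono)
    ultimately have "norm (Q (time_index ts t) (cell_index h c x)) \<in> S"
      unfolding S_def by force
    then show "norm (Q (time_index ts t) (cell_index h c x)) \<le> Max S" using fin by simp
  qed
qed

lemma test_props:
  assumes tf: "test_function \<phi> phx pht"
  obtains R \<delta> T where "0 \<le> R" "0 < \<delta>" "\<delta> \<le> T"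
    "\<And>x t. \<phi> (x,t) \<noteq> 0 \<Longrightarrow> \<bar>x\<bar> \<le> R \<and> \<delta> \<le> t \<and> t \<le> T"
    "\<And>x t. pht (x,t) \<noteq> 0 \<Longrightarrow> \<bar>x\<bar> \<le> R \<and> \<delta> \<le> t \<and> t \<le> T"
    "\<And>x t. phx (x,t) \<noteq> 0 \<Longrightarrow> \<bar>x\<bar> \<le> R \<and> \<delta> \<le> t \<and> t \<le> T"
proof -
  from tf obtain R0 \<delta> T0 where d: "0 < \<delta>" and sup0: "\<And>x t. \<phi> (x, t) \<noteq> 0 \<Longrightarrow> \<bar>x\<bar> \<le> R0 \<and> \<delta> \<le> t \<and> t \<le> T0"
    unfolding test_function_def by blast
  define R where "R = max R0 0"
  define T where "T = max T0 \<delta>"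
  have sup: "\<And>x t. \<phi> (x, t) \<noteq> 0 \<Longrightarrow> \<bar>x\<bar> \<le> R \<and> \<delta> \<le> t \<and> t \<le> T"
    using sup0 unfolding R_def T_def by force
  have Dt: "((\<lambda>s. \<phi> (x, s)) has_real_derivative pht (x, t)) (at t)" for x t
    using tf unfolding test_function_def by blast
  have Dx: "((\<lambda>y. \<phi> (y, t)) has_real_derivative phx (x, t)) (at x)" for x t
    using tf unfolding test_function_def by blast
  have pt: "\<bar>x\<bar> \<le> R \<and> \<delta> \<le> t \<and> t \<le> T" if "pht (x,t) \<noteq> 0" for x t
  proof (rule ccontr)
    assume n: "\<not> (\<bar>x\<bar> \<le> R \<and> \<delta> \<le> t \<and> t \<le> T)"
    have "\<exists>d>0. \<forall>y. \<bar>t - y\<bar> < d \<longrightarrow> \<phi> (x, y) = 0"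
    proof (cases "\<bar>x\<bar> \<le> R")
      case False then show ?thesis using sup by (intro exI[of _ 1]) force
    next
      case True
      then have "t < \<delta> \<or> T < t" using n by auto
      then show ?thesis
      proof
        assume "t < \<delta>" then show ?thesis using sup
          by (intro exI[of _ "\<delta> - t"]) (force simp: abs_less_iff)
      next
        assume "T < t" then show ?thesis using sup
          by (intro exI[of _ "t - T"]) (force simp: abs_less_iff)
      qed
    qed
    then obtain d where "d > 0" "\<forall>y. \<bar>t - y\<bar> < d \<longrightarrow> \<phi> (x, y) = 0" by blast
    then have "pht (x,t) = 0"
      by (intro DERIV_local_const[OF Dt[of x t], of d]) auto
    then show False using that by simp
  qed
  have px: "\<bar>x\<bar> \<le> R \<and> \<delta> \<le> t \<and> t \<le> T" if "phx (x,t) \<noteq> 0" for x t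
  proof (rule ccontr)
    assume n: "\<not> (\<bar>x\<bar> \<le> R \<and> \<delta> \<le> t \<and> t \<le> T)"
    have "\<exists>d>0. \<forall>y. \<bar>x - y\<bar> < d \<longrightarrow> \<phi> (y, t) = 0"
    proof (cases "\<delta> \<le> t \<and> t \<le> T")
      case False then show ?thesis using sup by (intro exI[of _ 1]) force
    next
      case True
      then have "R < \<bar>x\<bar>" using n by auto
      then show ?thesis using sup
        by (intro exI[of _ "\<bar>x\<bar> - R"]) (force simp: abs_less_iff abs_le_iff)
    qed
    then obtain d where "d > 0" "\<forall>y. \<bar>x - y\<bar> < d \<longrightarrow> \<phi> (y, t) = 0" by blast
    then have dd: "d > 0" "\<forall>y. \<bar>x - y\<bar> < d \<longrightarrow> \<phi> (x, t) = \<phi> (y, t)"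
      by (metis abs_zero diff_self)+
    have "phx (x,t) = 0"
      using DERIV_local_const[OF Dx[where x=x and t=t] dd(1) dd(2)] .
    then show False using that by simp
  qed
  show thesis
    by (rule that[of R \<delta> T]) (use d sup pt px in \<open>auto simp: R_def T_def\<close>)
qed

lemma norm_pair_le: "norm ((x::real, t::real)) \<le> \<bar>x\<bar> + \<bar>t\<bar>"
  by (simp add: norm_Pair sqrt_sum_squares_le_sum_abs)

lemma uc_zero_outside:
  fixes q :: "real \<times> real \<Rightarrow> real"
  assumes R0: "0 \<le> R" and T0: "0 \<le> T"
  assumes cont: "continuous_on UNIV q" and z: "\<And>x t. q (x,t) \<noteq> 0 \<Longrightarrow> \<bar>x\<bar> \<le> R \<and> \<bar>t\<bar> \<le> T"
  shows "\<forall>e>0. \<exists>d>0. \<forall>z z'. dist z z' < d \<longrightarrow> \<bar>q z - q z'\<bar> < e"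
    and "\<exists>B. \<forall>z. \<bar>q z\<bar> \<le> B"
proof -
  define S where "S = cball (0::real\<times>real) (R + T + 1)"
  have inS: "z \<in> cball 0 (R + T)" if "q z \<noteq> 0" for z
  proof -
    obtain x t where zz: "z = (x,t)" by force
    have "norm z \<le> \<bar>x\<bar> + \<bar>t\<bar>" using norm_pair_le zz by simp
    also have "\<dots> \<le> R + T" using z[of x t] that zz by auto
    finally show ?thesis by simp
  qed
  have cS: "compact S" unfolding S_def by simp
  have uc: "uniformly_continuous_on S q"
    using cS cont compact_uniformly_continuous continuous_on_subset by blast
  show "\<forall>e>0. \<exists>d>0. \<forall>z z'. dist z z' < d \<longrightarrow> \<bar>q z - q z'\<bar> < e"
  proof (intro allI impI)
    fix e :: real assume e: "e > 0"
    obtain d0 where d0: "d0 > 0" "\<forall>x\<in>S. \<forall>x'\<in>S. dist x' x < d0 \<longrightarrow> dist (q x') (q x) < e"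
      using uc e unfolding uniformly_continuous_on_def by blast
    show "\<exists>d>0. \<forall>z z'. dist z z' < d \<longrightarrow> \<bar>q z - q z'\<bar> < e"
    proof (intro exI[of _ "min d0 1"] conjI allI impI)
      show "min d0 1 > 0" using d0 by simp
      fix z z' :: "real \<times> real" assume dz: "dist z z' < min d0 1"
      show "\<bar>q z - q z'\<bar> < e"
      proof (cases "q z = 0 \<and> q z' = 0")
        case True then show ?thesis using e by simp
      next
        case False
        then have "z \<in> cball 0 (R+T) \<or> z' \<in> cball 0 (R+T)" using inS by blast
        then have "z \<in> S \<and> z' \<in> S"
          using dz unfolding S_def mem_cball
          by (smt (verit, best) dist_commute dist_triangle)
        then show ?thesis using d0(2) dz by (auto simp: dist_real_def dist_commute)
      qed
    qed
  qed
  have "compact (q ` S)" using cS cont by (intro compact_continuous_image) (auto intro: continuous_on_subset)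
  then obtain B where B: "\<forall>y\<in>q ` S. norm y \<le> B"
    using compact_imp_bounded bounded_iff by metis
  show "\<exists>B. \<forall>z. \<bar>q z\<bar> \<le> B"
  proof (intro exI allI)
    fix z
    have "0 \<in> S" unfolding S_def using R0 T0 by simp
    then have "0 \<le> B" using B by (smt (verit) image_eqI norm_ge_zero)
    show "\<bar>q z\<bar> \<le> B"
    proof (cases "q z = 0")
      case True then show ?thesis using \<open>0 \<le> B\<close> by simp
    next
      case False then have "norm z \<le> R + T" using inS[of z] by simp
      then have "z \<in> S" unfolding S_def by simp
      then show ?thesis using B by auto
    qed
  qed
qed

lemma ftc_t:
  assumes tf: "test_function \<phi> phx pht" and ab: "a \<le> b"
  shows "\<phi> (x,b) - \<phi> (x,a) = integral\<^sup>L lborel (\<lambda>s. indicator {a..b} s * pht (x,s))"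
proof -
  have D: "((\<lambda>s. \<phi> (x, s)) has_real_derivative pht (x, t)) (at t)" for t
    using tf unfolding test_function_def by blast
  have c: "continuous_on UNIV pht" using tf unfolding test_function_def by blast
  have "integral\<^sup>L lborel (\<lambda>s. indicator {a..b} s *\<^sub>R pht (x,s)) = \<phi> (x,b) - \<phi> (x,a)"
  proof (rule integral_FTC_atLeastAtMost[OF ab, where F="\<lambda>s. \<phi> (x,s)"])
    show "((\<lambda>s. \<phi> (x, s)) has_vector_derivative pht (x, t)) (at t within {a..b})" for t
      using D[of t] by (simp add: has_real_derivative_iff_has_vector_derivative has_vector_derivative_at_within)
    show "continuous_on {a..b} (\<lambda>s. pht (x, s))"
      by (rule continuous_on_compose2[OF c]) (auto intro: continuous_intros)
  qed
  then show ?thesis by simp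
qed

lemma ftc_x:
  assumes tf: "test_function \<phi> phx pht" and ab: "a \<le> b"
  shows "\<phi> (b,t) - \<phi> (a,t) = integral\<^sup>L lborel (\<lambda>y. indicator {a..b} y * phx (y,t))"
proof -
  have D: "((\<lambda>y. \<phi> (y, t)) has_real_derivative phx (x, t)) (at x)" for x
    using tf unfolding test_function_def by blast
  have c: "continuous_on UNIV phx" using tf unfolding test_function_def by blast
  have "integral\<^sup>L lborel (\<lambda>y. indicator {a..b} y *\<^sub>R phx (y,t)) = \<phi> (b,t) - \<phi> (a,t)"
  proof (rule integral_FTC_atLeastAtMost[OF ab, where F="\<lambda>y. \<phi> (y,t)"])
    show "((\<lambda>y. \<phi> (y, t)) has_vector_derivative phx (x, t)) (at x within {a..b})" for x
      using D[of x] by (simp add: has_real_derivative_iff_has_vector_derivative has_vector_derivative_at_within)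
    show "continuous_on {a..b} (\<lambda>y. phx (y, t))"
      by (rule continuous_on_compose2[OF c]) (auto intro: continuous_intros)
  qed
  then show ?thesis by simp
qed

lemma prod_int:
  fixes A B :: "real \<Rightarrow> real"
  assumes mA: "A \<in> borel_measurable borel" and mB: "B \<in> borel_measurable borel"
    and bA: "\<And>x. \<bar>A x\<bar> \<le> Ca * indicator {a..b} x"
    and bB: "\<And>t. \<bar>B t\<bar> \<le> Cb * indicator {c..d} t" and Ca: "0 \<le> Ca"
  shows "integrable lebesgue (\<lambda>z. A (fst z) * B (snd z))"
    "integral\<^sup>L lebesgue (\<lambda>z. A (fst z) * B (snd z)) = integral\<^sup>L lborel A * integral\<^sup>L lborel B"
proof -
  have mA': "A \<in> borel_measurable lborel" and mB': "B \<in> borel_measurable lborel"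
    using mA mB by auto
  have mP: "(\<lambda>z. A (fst z) * B (snd z)) \<in> borel_measurable (lborel \<Otimes>\<^sub>M lborel)"
    using mA' mB' by measurable
  have ib: "integrable (lborel \<Otimes>\<^sub>M lborel) (\<lambda>z::real\<times>real. Ca * Cb * indicator (cbox (a,c) (b,d)) z)"
  proof -
    have "integrable (lborel::(real\<times>real) measure) (\<lambda>z. Ca * Cb * indicator (cbox (a,c) (b,d)) z)"
      by (intro integrable_mult_right integrable_real_indicator) (auto simp: emeasure_lborel_cbox_finite[unfolded infinity_ennreal_def])
    then show ?thesis by (simp add: lborel_prod)
  qed
  have iP: "integrable (lborel \<Otimes>\<^sub>M lborel) (\<lambda>z. A (fst z) * B (snd z))"
  proof (rule Bochner_Integration.integrable_bound[OF ib mP], rule AE_I2)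
    fix z :: "real \<times> real"
    obtain x t where z: "z = (x,t)" by force
    have "\<bar>A x * B t\<bar> = \<bar>A x\<bar> * \<bar>B t\<bar>" by (simp add: abs_mult)
    also have "\<dots> \<le> (Ca * indicator {a..b} x) * (Cb * indicator {c..d} t)"
      using bA bB Ca by (intro mult_mono) auto
    also have "\<dots> = \<bar>Ca * Cb * indicator (cbox (a,c) (b,d)) z\<bar>"
      using Ca bB[of t] z by (auto split: split_indicator simp: abs_mult)
    finally show "norm (A (fst z) * B (snd z)) \<le> norm (Ca * Cb * indicator (cbox (a,c) (b,d)) z)"
      using z by simp
  qed
  have mL: "(\<lambda>z. A (fst z) * B (snd z)) \<in> borel_measurable (lborel::(real\<times>real) measure)"
    using mP by (simp add: lborel_prod)
  have iL: "integrable (lborel::(real\<times>real) measure) (\<lambda>z. A (fst z) * B (snd z))"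
    using iP by (simp add: lborel_prod)
  show "integrable lebesgue (\<lambda>z. A (fst z) * B (snd z))"
    using iL mL by (simp add: integrable_completion)
  have "integral\<^sup>L lebesgue (\<lambda>z. A (fst z) * B (snd z)) = integral\<^sup>L (lborel::(real\<times>real) measure) (\<lambda>z. A (fst z) * B (snd z))"
    using mL by (simp add: integral_completion)
  also have "\<dots> = integral\<^sup>L (lborel \<Otimes>\<^sub>M lborel) (\<lambda>z. A (fst z) * B (snd z))"
    by (simp add: lborel_prod)
  also have "\<dots> = (\<integral>x. (\<integral>t. A (fst (x,t)) * B (snd (x,t)) \<partial>lborel) \<partial>lborel)"
    using lborel_pair.integral_fst'[OF iP] by simp
  also have "\<dots> = (\<integral>x. A x * integral\<^sup>L lborel B \<partial>lborel)" by simp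
  also have "\<dots> = integral\<^sup>L lborel A * integral\<^sup>L lborel B" by simp
  finally show "integral\<^sup>L lebesgue (\<lambda>z. A (fst z) * B (snd z)) = integral\<^sup>L lborel A * integral\<^sup>L lborel B" .
qed

lemma int_Ico_Icc:
  fixes \<alpha> :: "real \<Rightarrow> real"
  assumes "\<alpha> \<in> borel_measurable borel"
  shows "integral\<^sup>L lborel (\<lambda>s. indicator {c..<d} s * \<alpha> s) = integral\<^sup>L lborel (\<lambda>s. indicator {c..d} s * \<alpha> s)"
  using assms by (intro integral_cong_AE) (auto intro!: AE_I'[of "{d}"] split: split_indicator simp: AE_lborel_singleton)

lemma int_Ico_length:
  assumes "a \<le> b"
  shows "integral\<^sup>L lborel (indicator {a..<b} :: real \<Rightarrow> real) = b - a"
proof -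
  have "integral\<^sup>L lborel (indicator {a..<b} :: real \<Rightarrow> real) = measure lborel {a..<b}"
    by (simp add: emeasure_lborel_Ico)
  also have "\<dots> = b - a" using assms by simp
  finally show ?thesis .
qed

lemma sbp_aux:
  fixes F :: "int \<Rightarrow> 'v::real_vector" and \<psi> :: "nat \<Rightarrow> real"
  shows "(\<Sum>i<M. \<psi> i *\<^sub>R (F (k0 + int i - 1) - F (k0 + int i))) =
         (\<Sum>i<M. (\<psi> (Suc i) - \<psi> i) *\<^sub>R F (k0 + int i)) + \<psi> 0 *\<^sub>R F (k0 - 1) - \<psi> M *\<^sub>R F (k0 + int M - 1)"
proof (induction M)
  case 0 then show ?case by simp
next
  case (Suc M)
  have e: "k0 + int (Suc M) - 1 = k0 + int M" by simp
  show ?case unfolding sum.lessThan_Suc Suc.IH e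
    by (simp add: algebra_simps)
qed

lemma sbp:
  fixes F :: "int \<Rightarrow> 'v::real_vector" and \<psi> :: "nat \<Rightarrow> real"
  assumes "\<psi> 0 = 0" "\<psi> M = 0"
  shows "(\<Sum>i<M. (\<psi> (Suc i) - \<psi> i) *\<^sub>R F (k0 + int i)) = (\<Sum>i<M. \<psi> i *\<^sub>R (F (k0 + int i - 1) - F (k0 + int i)))"
  using sbp_aux[of \<psi> F k0 M] assms by simp

lemma discrete_identity:
  fixes V F :: "nat \<Rightarrow> int \<Rightarrow> 'v::real_vector" and \<Phi> :: "int \<Rightarrow> nat \<Rightarrow> real" and t :: "nat \<Rightarrow> real"
  assumes h: "h \<noteq> 0"
    and sch: "\<And>n k. V (Suc n) k = V n k + ((t (Suc n) - t n) / h) *\<^sub>R (F n (k - 1) - F n k)"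
    and b0: "\<And>n. \<Phi> k0 n = 0" and b1: "\<And>n. \<Phi> (k0 + int M) n = 0"
    and tz: "\<And>k. \<Phi> k 0 = 0" and tN: "\<And>k. \<Phi> k N = 0"
  shows "(\<Sum>n<N. \<Sum>i<M. (h * (\<Phi> (k0 + int i) (Suc n) - \<Phi> (k0 + int i) n)) *\<^sub>R V n (k0 + int i)
            + ((t (Suc n) - t n) * (\<Phi> (k0 + int i + 1) (Suc n) - \<Phi> (k0 + int i) (Suc n))) *\<^sub>R F n (k0 + int i)) = 0"
proof -
  have step: "(\<Sum>i<M. ((t (Suc n) - t n) * (\<Phi> (k0 + int i + 1) (Suc n) - \<Phi> (k0 + int i) (Suc n))) *\<^sub>R F n (k0 + int i))
      = (\<Sum>i<M. h *\<^sub>R (\<Phi> (k0 + int i) (Suc n) *\<^sub>R (V (Suc n) (k0 + int i) - V n (k0 + int i))))" for n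
  proof -
    define \<psi> where "\<psi> i = \<Phi> (k0 + int i) (Suc n)" for i
    have p0: "\<psi> 0 = 0" "\<psi> M = 0" using b0 b1 by (auto simp: \<psi>_def)
    have "(\<Sum>i<M. ((t (Suc n) - t n) * (\<Phi> (k0 + int i + 1) (Suc n) - \<Phi> (k0 + int i) (Suc n))) *\<^sub>R F n (k0 + int i))
        = (t (Suc n) - t n) *\<^sub>R (\<Sum>i<M. (\<psi> (Suc i) - \<psi> i) *\<^sub>R F n (k0 + int i))"
      by (simp add: scaleR_sum_right \<psi>_def ac_simps)
    also have "\<dots> = (t (Suc n) - t n) *\<^sub>R (\<Sum>i<M. \<psi> i *\<^sub>R (F n (k0 + int i - 1) - F n (k0 + int i)))"
      using sbp[OF p0, of "F n" k0] by simp
    also have "\<dots> = (\<Sum>i<M. h *\<^sub>R (\<Phi> (k0 + int i) (Suc n) *\<^sub>R (V (Suc n) (k0 + int i) - V n (k0 + int i))))"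
      unfolding scaleR_sum_right
    proof (rule sum.cong[OF refl])
      fix i assume "i \<in> {..<M}"
      have "V (Suc n) (k0 + int i) - V n (k0 + int i) = ((t (Suc n) - t n) / h) *\<^sub>R (F n (k0 + int i - 1) - F n (k0 + int i))"
        using sch by simp
      then have "h *\<^sub>R (V (Suc n) (k0 + int i) - V n (k0 + int i)) = (t (Suc n) - t n) *\<^sub>R (F n (k0 + int i - 1) - F n (k0 + int i))"
        using h by simp
      then show "(t (Suc n) - t n) *\<^sub>R \<psi> i *\<^sub>R (F n (k0 + int i - 1) - F n (k0 + int i)) =
          h *\<^sub>R \<Phi> (k0 + int i) (Suc n) *\<^sub>R (V (Suc n) (k0 + int i) - V n (k0 + int i))"
        unfolding \<psi>_def by (metis scaleR_left_commute)
    qed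
    finally show ?thesis .
  qed
  have "(\<Sum>n<N. \<Sum>i<M. (h * (\<Phi> (k0 + int i) (Suc n) - \<Phi> (k0 + int i) n)) *\<^sub>R V n (k0 + int i)
            + ((t (Suc n) - t n) * (\<Phi> (k0 + int i + 1) (Suc n) - \<Phi> (k0 + int i) (Suc n))) *\<^sub>R F n (k0 + int i))
     = (\<Sum>n<N. \<Sum>i<M. h *\<^sub>R (\<Phi> (k0 + int i) (Suc n) *\<^sub>R V (Suc n) (k0 + int i) - \<Phi> (k0 + int i) n *\<^sub>R V n (k0 + int i)))"
  proof (rule sum.cong[OF refl])
    fix n assume "n \<in> {..<N}"
    show "(\<Sum>i<M. (h * (\<Phi> (k0 + int i) (Suc n) - \<Phi> (k0 + int i) n)) *\<^sub>R V n (k0 + int i)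
            + ((t (Suc n) - t n) * (\<Phi> (k0 + int i + 1) (Suc n) - \<Phi> (k0 + int i) (Suc n))) *\<^sub>R F n (k0 + int i))
        = (\<Sum>i<M. h *\<^sub>R (\<Phi> (k0 + int i) (Suc n) *\<^sub>R V (Suc n) (k0 + int i) - \<Phi> (k0 + int i) n *\<^sub>R V n (k0 + int i)))"
      unfolding sum.distrib step
      unfolding sum.distrib[symmetric]
      by (rule sum.cong[OF refl]) (simp add: algebra_simps)
  qed
  also have "\<dots> = (\<Sum>i<M. \<Sum>n<N. h *\<^sub>R (\<Phi> (k0 + int i) (Suc n) *\<^sub>R V (Suc n) (k0 + int i) - \<Phi> (k0 + int i) n *\<^sub>R V n (k0 + int i)))"
    by (rule sum.swap)
  also have "\<dots> = (\<Sum>i<M. h *\<^sub>R (\<Phi> (k0 + int i) N *\<^sub>R V N (k0 + int i) - \<Phi> (k0 + int i) 0 *\<^sub>R V 0 (k0 + int i)))"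
    unfolding scaleR_sum_right[symmetric]
    by (subst sum_lessThan_telescope[where f="\<lambda>n. \<Phi> (k0 + int _) n *\<^sub>R V n (k0 + int _)"]) (rule refl)
  also have "\<dots> = 0" using tz tN by simp
  finally show ?thesis .
qed

lemma ftc_x_shift:
  assumes tf: "test_function \<phi> phx pht" and ab: "a \<le> b"
  shows "\<phi> (b + s, t) - \<phi> (a + s, t) = integral\<^sup>L lborel (\<lambda>y. indicator {a..b} y * phx (y + s, t))"
proof -
  have D: "((\<lambda>y. \<phi> (y, t)) has_real_derivative phx (x, t)) (at x)" for x
    using tf unfolding test_function_def by blast
  have D': "((\<lambda>y. \<phi> (y + s, t)) has_real_derivative phx (x + s, t)) (at x)" for x
    using D[of "x + s"] DERIV_shift[of "\<lambda>y. \<phi> (y, t)" "phx (x + s, t)" x s] by simp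
  have c: "continuous_on UNIV phx" using tf unfolding test_function_def by blast
  have "integral\<^sup>L lborel (\<lambda>y. indicator {a..b} y *\<^sub>R phx (y + s,t)) = \<phi> (b + s,t) - \<phi> (a + s,t)"
  proof (rule integral_FTC_atLeastAtMost[OF ab, where F="\<lambda>y. \<phi> (y + s,t)"])
    show "((\<lambda>y. \<phi> (y + s, t)) has_vector_derivative phx (x + s, t)) (at x within {a..b})" for x
      using D'[of x] by (simp add: has_real_derivative_iff_has_vector_derivative has_vector_derivative_at_within)
    show "continuous_on {a..b} (\<lambda>y. phx (y + s, t))"
      by (rule continuous_on_compose2[OF c]) (auto intro!: continuous_intros)
  qed
  then show ?thesis by simp
qed

lemma rect_term:
  fixes Vv Fv :: "'v::euclidean_space" and m :: real
  assumes tf: "test_function \<phi> phx pht" and h: "h > 0" and tab: "ta \<le> tb"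
    and Pt: "\<And>z. \<bar>pht z\<bar> \<le> P" and Px: "\<And>z. \<bar>phx z\<bar> \<le> P"
  defines "H \<equiv> \<lambda>z. if ta \<le> snd z \<and> snd z < tb \<and> m - h/2 \<le> fst z \<and> fst z < m + h/2
                   then pht (m, snd z) *\<^sub>R Vv + phx (fst z + h/2, tb) *\<^sub>R Fv else 0"
  shows "integrable lebesgue H"
    "integral\<^sup>L lebesgue H = (h * (\<phi> (m,tb) - \<phi> (m,ta))) *\<^sub>R Vv + ((tb - ta) * (\<phi> (m + h, tb) - \<phi> (m, tb))) *\<^sub>R Fv"
proof -
  have P0: "0 \<le> P" using Pt[of 0] by simp
  have ct: "continuous_on UNIV pht" and cx: "continuous_on UNIV phx"
    using tf unfolding test_function_def by blast+
  have cpt: "continuous_on UNIV (\<lambda>t. pht (m,t))"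
    by (rule continuous_on_compose2[OF ct]) (auto intro!: continuous_intros)
  have cpx: "continuous_on UNIV (\<lambda>x. phx (x + h/2, tb))"
    by (rule continuous_on_compose2[OF cx]) (auto intro!: continuous_intros)
  have [measurable]: "(\<lambda>t. pht (m,t)) \<in> borel_measurable borel" "(\<lambda>x. phx (x + h/2, tb)) \<in> borel_measurable borel"
    using cpt cpx by (auto intro: borel_measurable_continuous_onI)
  define A1 where "A1 = (\<lambda>x::real. indicator {m - h/2..<m + h/2} x :: real)"
  define B1 where "B1 = (\<lambda>t::real. indicator {ta..<tb} t * pht (m,t))"
  define A2 where "A2 = (\<lambda>x::real. indicator {m - h/2..<m + h/2} x * phx (x + h/2, tb))"
  define B2 where "B2 = (\<lambda>t::real. indicator {ta..<tb} t :: real)"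
  have Hd: "H = (\<lambda>z. (A1 (fst z) * B1 (snd z)) *\<^sub>R Vv + (A2 (fst z) * B2 (snd z)) *\<^sub>R Fv)"
    unfolding H_def A1_def B1_def A2_def B2_def by (auto split: split_indicator)
  have mA1: "A1 \<in> borel_measurable borel" unfolding A1_def by measurable
  have mB1: "B1 \<in> borel_measurable borel" unfolding B1_def by measurable
  have mA2: "A2 \<in> borel_measurable borel" unfolding A2_def by measurable
  have mB2: "B2 \<in> borel_measurable borel" unfolding B2_def by measurable
  have bA1: "\<bar>A1 x\<bar> \<le> 1 * indicator {m - h/2..m + h/2} x" for x
    unfolding A1_def by (auto split: split_indicator)
  have bB1: "\<bar>B1 t\<bar> \<le> P * indicator {ta..tb} t" for t
    unfolding B1_def using Pt[of "(m,t)"] by (auto split: split_indicator)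
  have bA2: "\<bar>A2 x\<bar> \<le> P * indicator {m - h/2..m + h/2} x" for x
    unfolding A2_def using Px[of "(x + h/2, tb)"] by (auto split: split_indicator)
  have bB2: "\<bar>B2 t\<bar> \<le> 1 * indicator {ta..tb} t" for t
    unfolding B2_def by (auto split: split_indicator)
  note I1 = prod_int[OF mA1 mB1 bA1 bB1, simplified]
  note I2 = prod_int[OF mA2 mB2 bA2 bB2 P0]
  have iA1: "integral\<^sup>L lborel A1 = h" unfolding A1_def using h int_Ico_length[of "m - h/2" "m + h/2"] by simp
  have iB2: "integral\<^sup>L lborel B2 = tb - ta" unfolding B2_def using tab int_Ico_length by simp
  have iB1: "integral\<^sup>L lborel B1 = \<phi> (m,tb) - \<phi> (m,ta)"
    unfolding B1_def using int_Ico_Icc[of "\<lambda>t. pht (m,t)" ta tb] ftc_t[OF tf tab, of m] by simp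
  have iA2: "integral\<^sup>L lborel A2 = \<phi> (m + h, tb) - \<phi> (m, tb)"
  proof -
    have "integral\<^sup>L lborel A2 = integral\<^sup>L lborel (\<lambda>x. indicator {m - h/2..m + h/2} x * phx (x + h/2, tb))"
      unfolding A2_def by (rule int_Ico_Icc) measurable
    also have "\<dots> = \<phi> (m + h/2 + h/2, tb) - \<phi> (m - h/2 + h/2, tb)"
      using ftc_x_shift[OF tf, of "m - h/2" "m + h/2" "h/2" tb] h by simp
    finally show ?thesis by (simp add: add.commute)
  qed
  show "integrable lebesgue H" unfolding Hd using I1(1) I2(1) by auto
  show "integral\<^sup>L lebesgue H = (h * (\<phi> (m,tb) - \<phi> (m,ta))) *\<^sub>R Vv + ((tb - ta) * (\<phi> (m + h, tb) - \<phi> (m, tb))) *\<^sub>R Fv"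
  proof -
    have "integral\<^sup>L lebesgue (\<lambda>z. (A1 (fst z) * B1 (snd z)) *\<^sub>R Vv + (A2 (fst z) * B2 (snd z)) *\<^sub>R Fv)
       = integral\<^sup>L lebesgue (\<lambda>z. (A1 (fst z) * B1 (snd z)) *\<^sub>R Vv) + integral\<^sup>L lebesgue (\<lambda>z. (A2 (fst z) * B2 (snd z)) *\<^sub>R Fv)"
      using I1 I2 by (intro Bochner_Integration.integral_add) auto
    also have "\<dots> = (h * (\<phi> (m,tb) - \<phi> (m,ta))) *\<^sub>R Vv + ((tb - ta) * (\<phi> (m + h, tb) - \<phi> (m, tb))) *\<^sub>R Fv"
      using I1 I2 iA1 iB1 iA2 iB2 by (simp add: mult.commute)
    finally show ?thesis unfolding Hd .
  qed
qed

definition Gfun :: "(real\<times>real \<Rightarrow> real) \<Rightarrow> (real\<times>real \<Rightarrow> real) \<Rightarrow> real \<Rightarrow> real \<Rightarrow> (nat \<Rightarrow> real)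
   \<Rightarrow> (nat \<Rightarrow> int \<Rightarrow> 'v) \<Rightarrow> (nat \<Rightarrow> int \<Rightarrow> 'v) \<Rightarrow> real\<times>real \<Rightarrow> 'v::real_vector" where
  "Gfun phx pht h c ts V F z = (if snd z < 0 then 0 else
     pht (midpt h c (cell_index h c (fst z)), snd z) *\<^sub>R V (time_index ts (snd z)) (cell_index h c (fst z))
   + phx (fst z + h/2, ts (Suc (time_index ts (snd z)))) *\<^sub>R F (time_index ts (snd z)) (cell_index h c (fst z)))"

lemma sum_delta_int:
  "(\<Sum>i<M. if kk = k0 + int i then X i else 0) = (if k0 \<le> kk \<and> kk < k0 + int M then X (nat (kk - k0)) else 0)"
proof (cases "k0 \<le> kk \<and> kk < k0 + int M")
  case True
  have "(\<Sum>i<M. if kk = k0 + int i then X i else 0) = (\<Sum>i<M. if nat (kk - k0) = i then X i else 0)"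
    using True by (intro sum.cong) auto
  also have "\<dots> = X (nat (kk - k0))"
  proof -
    have "nat (kk - k0) < M" using True by (simp add: nat_less_iff)
    then show ?thesis by (simp add: sum.delta)
  qed
  finally show ?thesis using True by simp
next
  case False
  then show ?thesis by (auto intro!: sum.neutral)
qed

lemma midpt_mono: "h > 0 \<Longrightarrow> k \<le> k' \<Longrightarrow> midpt h c k \<le> midpt h c k'"
  unfolding midpt_def by (simp add: mult_right_mono)

lemma midpt_Suc: "midpt h c (k + 1) = midpt h c k + h"
  unfolding midpt_def by (simp add: algebra_simps)

lemma G_integral_zero:
  fixes V F :: "nat \<Rightarrow> int \<Rightarrow> 'v::euclidean_space"
  assumes tf: "test_function \<phi> phx pht" and h: "h > 0"
    and mono: "\<forall>n. ts n < ts (Suc n)" and t0: "ts 0 = 0" and unb: "filterlim ts at_top sequentially"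
    and sch: "\<And>n k. V (Suc n) k = V n k + ((ts (Suc n) - ts n) / h) *\<^sub>R (F n (k - 1) - F n k)"
  shows "integrable lebesgue (Gfun phx pht h c ts V F) \<and> integral\<^sup>L lebesgue (Gfun phx pht h c ts V F) = 0"
proof -
  obtain R \<delta> T where R0: "0 \<le> R" and d0: "0 < \<delta>" and dT: "\<delta> \<le> T"
    and sphi: "\<And>x t. \<phi> (x,t) \<noteq> 0 \<Longrightarrow> \<bar>x\<bar> \<le> R \<and> \<delta> \<le> t \<and> t \<le> T"
    and spt: "\<And>x t. pht (x,t) \<noteq> 0 \<Longrightarrow> \<bar>x\<bar> \<le> R \<and> \<delta> \<le> t \<and> t \<le> T"
    and spx: "\<And>x t. phx (x,t) \<noteq> 0 \<Longrightarrow> \<bar>x\<bar> \<le> R \<and> \<delta> \<le> t \<and> t \<le> T"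
    using test_props[OF tf] by metis
  have ct: "continuous_on UNIV pht" and cx: "continuous_on UNIV phx"
    using tf unfolding test_function_def by blast+
  obtain Bt where Bt: "\<And>z. \<bar>pht z\<bar> \<le> Bt"
    using uc_zero_outside(2)[OF R0 _ ct, of T] spt dT d0 by force
  obtain Bx where Bx: "\<And>z. \<bar>phx z\<bar> \<le> Bx"
    using uc_zero_outside(2)[OF R0 _ cx, of T] spx dT d0 by force
  define P where "P = max Bt Bx"
  have Pt: "\<And>z. \<bar>pht z\<bar> \<le> P" and Px: "\<And>z. \<bar>phx z\<bar> \<le> P"
    unfolding P_def using Bt Bx by (meson max.coboundedI1 max.coboundedI2)+
  have sm: "strict_mono ts" using mono by (simp add: strict_mono_Suc_iff)
  have tsnn: "0 \<le> ts n" for n using sm t0 by (metis le0 strict_mono_less_eq)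
  have "\<forall>\<^sub>F n in sequentially. T < ts n" using unb by (simp add: filterlim_at_top_dense)
  then obtain N0 where "\<forall>n\<ge>N0. T < ts n" by (auto simp: eventually_sequentially)
  then have N0: "T < ts N0" by simp
  define k0 where "k0 = \<lfloor>(- R - c) / h\<rfloor> - 1"
  define k1 where "k1 = \<lceil>(R - c) / h\<rceil>"
  define M where "M = nat (k1 + 1 - k0)"
  have "(- R - c) / h \<le> (R - c) / h" using h R0 by (simp add: divide_right_mono)
  then have "k0 \<le> k1" unfolding k0_def k1_def
    by (smt (verit, ccfv_SIG) ceiling_correct floor_le_ceiling le_floor_iff of_int_floor_le)
  then have kM: "k0 + int M = k1 + 1" unfolding M_def by simp
  have m0: "midpt h c k0 \<le> - R - h"
  proof -
    have "of_int k0 \<le> (- R - c) / h - 1" unfolding k0_def by (simp add: of_int_floor_le)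
    then have "of_int k0 * h \<le> ((- R - c) / h - 1) * h" using h by (simp add: mult_right_mono)
    moreover have "((- R - c) / h - 1) * h = - R - c - h" using h by (simp add: field_simps)
    ultimately show ?thesis unfolding midpt_def by linarith
  qed
  have m1: "R + h \<le> midpt h c (k1 + 1)"
  proof -
    have "(R - c) / h \<le> of_int k1" unfolding k1_def by simp
    then have "((R - c) / h) * h \<le> of_int k1 * h" using h by (intro mult_right_mono) auto
    moreover have "((R - c) / h) * h = R - c" using h by simp
    ultimately show ?thesis unfolding midpt_def by (simp add: algebra_simps)
  qed
  define g where "g n k z = pht (midpt h c k, snd z) *\<^sub>R V n k + phx (fst z + h/2, ts (Suc n)) *\<^sub>R F n k" for n k z
  define H where "H n i z = (if ts n \<le> snd z \<and> snd z < ts (Suc n) \<and> midpt h c (k0 + int i) - h/2 \<le> fst z \<and> fst z < midpt h c (k0 + int i) + h/2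
      then pht (midpt h c (k0 + int i), snd z) *\<^sub>R V n (k0 + int i) + phx (fst z + h/2, ts (Suc n)) *\<^sub>R F n (k0 + int i) else 0)" for n i z
  have Halt: "H n i z = (if 0 \<le> snd z \<and> time_index ts (snd z) = n \<and> cell_index h c (fst z) = k0 + int i then g n (k0 + int i) z else 0)" for n i z
  proof -
    have "(ts n \<le> snd z \<and> snd z < ts (Suc n)) \<longleftrightarrow> (0 \<le> snd z \<and> time_index ts (snd z) = n)"
      using time_index_iff[OF mono t0 unb, of "snd z" n] tsnn[of n] by auto
    moreover have "(midpt h c (k0 + int i) - h/2 \<le> fst z \<and> fst z < midpt h c (k0 + int i) + h/2) \<longleftrightarrow> cell_index h c (fst z) = k0 + int i"
      using cell_index_iff[OF h] by simp
    ultimately show ?thesis unfolding H_def g_def by auto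
  qed
  have Gdec: "Gfun phx pht h c ts V F z = (\<Sum>n<N0. \<Sum>i<M. H n i z)" for z
  proof -
    define tn where "tn = time_index ts (snd z)"
    define ck where "ck = cell_index h c (fst z)"
    have "(\<Sum>n<N0. \<Sum>i<M. H n i z) = (\<Sum>n<N0. if 0 \<le> snd z \<and> tn = n then (\<Sum>i<M. if ck = k0 + int i then g n (k0 + int i) z else 0) else 0)"
      unfolding Halt tn_def ck_def by (intro sum.cong) (auto intro!: sum.cong)
    also have "\<dots> = (if 0 \<le> snd z \<and> tn < N0 \<and> k0 \<le> ck \<and> ck < k0 + int M then g tn ck z else 0)"
    proof -
      have inner: "(\<Sum>i<M. if ck = k0 + int i then g n (k0 + int i) z else 0) = (if k0 \<le> ck \<and> ck < k0 + int M then g n ck z else 0)" for n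
        unfolding sum_delta_int by auto
      show ?thesis
      proof (cases "k0 \<le> ck \<and> ck < k0 + int M")
        case True then show ?thesis unfolding inner if_P[OF True]
          by (cases "0 \<le> snd z") (simp_all add: sum.delta')
      next
        case False
        have F2: "\<not> (0 \<le> snd z \<and> tn < N0 \<and> k0 \<le> ck \<and> ck < k0 + int M)" using False by blast
        show ?thesis unfolding inner if_not_P[OF False] if_not_P[OF F2] by simp
      qed
    qed
    also have "\<dots> = Gfun phx pht h c ts V F z"
    proof (cases "0 \<le> snd z \<and> tn < N0 \<and> k0 \<le> ck \<and> ck < k0 + int M")
      case True then show ?thesis unfolding Gfun_def g_def tn_def ck_def by auto
    next
      case False
      show ?thesis
      proof (cases "snd z < 0")
        case True then show ?thesis using False unfolding Gfun_def by simp
      next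
        case nn: False
        have tnp: "ts tn \<le> snd z \<and> snd z < ts (Suc tn)" unfolding tn_def
          using time_index_props[OF mono t0 unb] nn by simp
        have ckp: "midpt h c ck - h/2 \<le> fst z \<and> fst z < midpt h c ck + h/2"
          using cell_index_iff[OF h, of c "fst z" ck] ck_def by simp
        have "pht (midpt h c ck, snd z) = 0 \<and> phx (fst z + h/2, ts (Suc tn)) = 0"
        proof (cases "N0 \<le> tn")
          case True
          then have "ts N0 \<le> ts tn" "ts N0 \<le> ts (Suc tn)" using sm by (auto simp: strict_mono_less_eq)
          then show ?thesis using spt[of "midpt h c ck" "snd z"] spx[of "fst z + h/2" "ts (Suc tn)"] N0 tnp by force
        next
          case False
          then have "ck < k0 \<or> k1 + 1 \<le> ck" using \<open>\<not> (0 \<le> snd z \<and> tn < N0 \<and> k0 \<le> ck \<and> ck < k0 + int M)\<close> nn kM by auto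
          then show ?thesis
          proof
            assume "ck < k0"
            then have "midpt h c ck + h \<le> midpt h c k0" using midpt_mono[OF h, of "ck + 1" k0 c] midpt_Suc[of h c ck] by simp
            then show ?thesis using spt[of "midpt h c ck" "snd z"] spx[of "fst z + h/2" "ts (Suc tn)"] m0 ckp h by force
          next
            assume "k1 + 1 \<le> ck"
            then have "midpt h c (k1 + 1) \<le> midpt h c ck" using midpt_mono[OF h] by simp
            then show ?thesis using spt[of "midpt h c ck" "snd z"] spx[of "fst z + h/2" "ts (Suc tn)"] m1 ckp h by force
          qed
        qed
        then have "Gfun phx pht h c ts V F z = 0" using nn unfolding Gfun_def tn_def ck_def by simp
        then show ?thesis by (simp only: if_not_P[OF False])
      qed
    qed
    finally show ?thesis ..
  qed
  define \<Phi> where "\<Phi> k n = \<phi> (midpt h c k, ts n)" for k n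
  have Hint: "integrable lebesgue (H n i) \<and> integral\<^sup>L lebesgue (H n i) =
      (h * (\<Phi> (k0 + int i) (Suc n) - \<Phi> (k0 + int i) n)) *\<^sub>R V n (k0 + int i)
      + ((ts (Suc n) - ts n) * (\<Phi> (k0 + int i + 1) (Suc n) - \<Phi> (k0 + int i) (Suc n))) *\<^sub>R F n (k0 + int i)" for n i
  proof -
    have tab: "ts n \<le> ts (Suc n)" using mono less_imp_le by blast
    have Hd: "H n i = (\<lambda>z. if ts n \<le> snd z \<and> snd z < ts (Suc n) \<and> midpt h c (k0 + int i) - h/2 \<le> fst z \<and> fst z < midpt h c (k0 + int i) + h/2
      then pht (midpt h c (k0 + int i), snd z) *\<^sub>R V n (k0 + int i) + phx (fst z + h/2, ts (Suc n)) *\<^sub>R F n (k0 + int i) else 0)"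
      unfolding H_def by (rule ext) simp
    show ?thesis unfolding Hd \<Phi>_def midpt_Suc
      using rect_term[OF tf h tab Pt Px, of "midpt h c (k0 + int i)" "V n (k0 + int i)" "F n (k0 + int i)"] by simp
  qed
  have intG: "integrable lebesgue (Gfun phx pht h c ts V F)"
  proof -
    have "integrable lebesgue (\<lambda>z. \<Sum>n<N0. \<Sum>i<M. H n i z)" using Hint by auto
    moreover have "Gfun phx pht h c ts V F = (\<lambda>z. \<Sum>n<N0. \<Sum>i<M. H n i z)" using Gdec by (rule ext)
    ultimately show ?thesis by simp
  qed
  have "integral\<^sup>L lebesgue (Gfun phx pht h c ts V F) = integral\<^sup>L lebesgue (\<lambda>z. \<Sum>n<N0. \<Sum>i<M. H n i z)"
    using Gdec by (metis ext)
  also have "\<dots> = (\<Sum>n<N0. \<Sum>i<M. integral\<^sup>L lebesgue (H n i))"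
    using Hint by (simp add: integral_sum)
  also have "\<dots> = (\<Sum>n<N0. \<Sum>i<M. (h * (\<Phi> (k0 + int i) (Suc n) - \<Phi> (k0 + int i) n)) *\<^sub>R V n (k0 + int i)
      + ((ts (Suc n) - ts n) * (\<Phi> (k0 + int i + 1) (Suc n) - \<Phi> (k0 + int i) (Suc n))) *\<^sub>R F n (k0 + int i))"
    using Hint by simp
  also have "\<dots> = 0"
  proof (rule discrete_identity[where M=M and N=N0])
    show "h \<noteq> 0" using h by simp
    show "V (Suc n) k = V n k + ((ts (Suc n) - ts n) / h) *\<^sub>R (F n (k - 1) - F n k)" for n k by (rule sch)
    show "\<Phi> k0 n = 0" for n unfolding \<Phi>_def using sphi[of "midpt h c k0" "ts n"] m0 h by force
    show "\<Phi> (k0 + int M) n = 0" for n unfolding \<Phi>_def kM using sphi[of "midpt h c (k1+1)" "ts n"] m1 h by force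
    show "\<Phi> k 0 = 0" for k unfolding \<Phi>_def using sphi[of "midpt h c k" "ts 0"] t0 d0 by force
    show "\<Phi> k N0 = 0" for k unfolding \<Phi>_def using sphi[of "midpt h c k" "ts N0"] N0 by force
  qed
  finally show ?thesis using intG by simp
qed

lemma lip2:
  fixes q :: "'a::real_normed_vector \<Rightarrow> 'a \<Rightarrow> 'b::real_normed_vector"
  assumes "L-lipschitz_on UNIV (\<lambda>(a, b). q a b)"
  shows "0 \<le> L" "norm (q a b - q a' b') \<le> L * (norm (a - a') + norm (b - b'))"
proof -
  show L0: "0 \<le> L" using assms unfolding lipschitz_on_def by blast
  have "dist (q a b) (q a' b') \<le> L * dist (a, b) (a', b')"
    using assms unfolding lipschitz_on_def by (metis (no_types, lifting) UNIV_I case_prod_conv)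
  also have "dist (a, b) (a', b') \<le> dist a a' + dist b b'"
    unfolding dist_Pair_Pair
    by (metis (no_types) abs_of_nonneg sqrt_sum_squares_le_sum_abs zero_le_dist)
  then have "L * dist (a, b) (a', b') \<le> L * (dist a a' + dist b b')" using L0 by (simp add: mult_left_mono)
  finally show "norm (q a b - q a' b') \<le> L * (norm (a - a') + norm (b - b'))" by (simp add: dist_norm)
qed

lemma flux_cons:
  assumes "\<forall>a. hh a a = f a" "\<forall>a. g a a = f a"
  shows "flux_family \<alpha> hh g l m a a = f a"
  using assms unfolding flux_family_def by (simp add: scaleR_add_left[symmetric])

lemma flux_lip:
  fixes hh g :: "'v::real_normed_vector \<Rightarrow> 'v \<Rightarrow> 'v"
  assumes hl: "Lh-lipschitz_on UNIV (\<lambda>(a, b). hh a b)" and gl: "Lg-lipschitz_on UNIV (\<lambda>(a, b). g a b)"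
    and al: "0 \<le> \<alpha>" "\<alpha> \<le> 1"
  shows "norm (flux_family \<alpha> hh g l m a b - flux_family \<alpha> hh g l m a' b') \<le> (Lh + Lg) * (norm (a - a') + norm (b - b'))"
proof -
  note H = lip2[OF hl] and G = lip2[OF gl]
  let ?D = "norm (a - a') + norm (b - b')"
  have D0: "0 \<le> ?D" by simp
  have hb: "norm (hh a b - hh a' b') \<le> Lh * ?D" by (rule H(2))
  have gb: "norm (g a b - g a' b') \<le> Lg * ?D" by (rule G(2))
  have gb': "norm (g b a - g b' a') \<le> Lg * ?D" using G(2)[of b a b' a'] by (simp add: add.commute)
  have comb: "norm ((\<alpha> *\<^sub>R X + (1 - \<alpha>) *\<^sub>R Y) - (\<alpha> *\<^sub>R X' + (1 - \<alpha>) *\<^sub>R Y')) \<le> (Lh + Lg) * ?D"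
    if "norm (X - X') \<le> Lg * ?D" "norm (Y - Y') \<le> Lh * ?D" for X X' Y Y' :: 'v
  proof -
    have "(\<alpha> *\<^sub>R X + (1 - \<alpha>) *\<^sub>R Y) - (\<alpha> *\<^sub>R X' + (1 - \<alpha>) *\<^sub>R Y') = \<alpha> *\<^sub>R (X - X') + (1 - \<alpha>) *\<^sub>R (Y - Y')"
      by (simp add: algebra_simps)
    then have "norm (\<dots>) \<le> \<alpha> * norm (X - X') + (1 - \<alpha>) * norm (Y - Y')"
      using al by (metis (no_types, lifting) abs_of_nonneg diff_ge_0_iff_ge norm_scaleR norm_triangle_ineq)
    also have "\<dots> \<le> 1 * (Lg * ?D) + 1 * (Lh * ?D)"
      using al that by (intro add_mono mult_mono) (auto simp: H(1) G(1))
    finally show ?thesis by (simp add: algebra_simps)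
  qed
  have "Lh * ?D \<le> (Lh + Lg) * ?D" using G(1) D0 by (simp add: mult_right_mono)
  then show ?thesis unfolding flux_family_def using hb comb[OF gb hb] comb[OF gb' hb] by auto
qed

lemma numflux_bound:
  fixes hh g :: "'v::real_normed_vector \<Rightarrow> 'v \<Rightarrow> 'v"
  assumes hl: "Lh-lipschitz_on UNIV (\<lambda>(a, b). hh a b)" and gl: "Lg-lipschitz_on UNIV (\<lambda>(a, b). g a b)"
    and al: "0 \<le> \<alpha>" "\<alpha> \<le> 1"
    and hc: "\<forall>a. hh a a = f a" and gc: "\<forall>a. g a a = f a"
    and As: "(\<Sum>l\<in>stencil p. \<Sum>m\<in>stencil p. A l m) = 1"
  shows "norm (num_flux p A \<alpha> hh g V k - f (V k)) \<le>
     2 * (Lh + Lg) * (\<Sum>l\<in>stencil p. \<Sum>m\<in>stencil p. \<bar>A l m\<bar>) * (\<Sum>l\<in>stencil p. norm (V (k + l) - V k))"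
proof -
  define Z where "Z = stencil p"
  define D where "D = (\<Sum>l\<in>Z. norm (V (k + l) - V k))"
  define L where "L = Lh + Lg"
  define \<Psi> where "\<Psi> l m = A l m *\<^sub>R (flux_family \<alpha> hh g l m (V (k + l)) (V (k + m)) - f (V k))" for l m
  have fin: "finite Z" unfolding Z_def stencil_def by simp
  have L0: "0 \<le> L" unfolding L_def using lip2(1)[OF hl] lip2(1)[OF gl] by simp
  have Dl: "norm (V (k + l) - V k) \<le> D" if "l \<in> Z" for l
    unfolding D_def using fin that by (intro member_le_sum) auto
  have e1: "num_flux p A \<alpha> hh g V k = (\<Sum>l\<in>Z. \<Sum>m\<in>Z. A l m *\<^sub>R flux_family \<alpha> hh g l m (V (k + l)) (V (k + m)))"
    unfolding num_flux_def Z_def ..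
  have e2: "(\<Sum>l\<in>Z. \<Sum>m\<in>Z. A l m *\<^sub>R f (V k)) = f (V k)"
    using As unfolding Z_def scaleR_sum_left[symmetric] by simp
  have e3: "num_flux p A \<alpha> hh g V k - f (V k) = (\<Sum>l\<in>Z. \<Sum>m\<in>Z. \<Psi> l m)"
    unfolding \<Psi>_def scaleR_diff_right sum_subtractf e1 e2 ..
  have b: "norm (\<Psi> l m) \<le> \<bar>A l m\<bar> * (2 * L * D)" if l: "l \<in> Z" and m: "m \<in> Z" for l m
  proof -
    have fc: "f (V k) = flux_family \<alpha> hh g l m (V k) (V k)"
      using flux_cons[where hh=hh and g=g and f=f, OF hc gc] by simp
    have "norm (flux_family \<alpha> hh g l m (V (k + l)) (V (k + m)) - f (V k))
        \<le> L * (norm (V (k + l) - V k) + norm (V (k + m) - V k))"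
      unfolding fc L_def by (rule flux_lip[OF hl gl al])
    also have "\<dots> \<le> L * (2 * D)" using Dl[OF l] Dl[OF m] L0 by (intro mult_left_mono) auto
    finally have "norm (flux_family \<alpha> hh g l m (V (k + l)) (V (k + m)) - f (V k)) \<le> 2 * L * D" by simp
    then show ?thesis unfolding \<Psi>_def norm_scaleR by (intro mult_left_mono) auto
  qed
  have "norm (\<Sum>l\<in>Z. \<Sum>m\<in>Z. \<Psi> l m) \<le> (\<Sum>l\<in>Z. norm (\<Sum>m\<in>Z. \<Psi> l m))" by (rule norm_sum)
  also have "\<dots> \<le> (\<Sum>l\<in>Z. \<Sum>m\<in>Z. norm (\<Psi> l m))" by (intro sum_mono norm_sum)
  also have "\<dots> \<le> (\<Sum>l\<in>Z. \<Sum>m\<in>Z. \<bar>A l m\<bar> * (2 * L * D))" by (intro sum_mono b)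
  also have "\<dots> = 2 * L * (\<Sum>l\<in>Z. \<Sum>m\<in>Z. \<bar>A l m\<bar>) * D"
    by (simp add: sum_distrib_left[symmetric] mult.commute mult.left_commute)
  finally show ?thesis unfolding e3 Z_def D_def L_def .
qed

lemma meas_ae_eq_lebesgue:
  fixes f g :: "'a::euclidean_space \<Rightarrow> 'b::topological_space"
  assumes g: "g \<in> borel_measurable lebesgue" and N: "N \<in> null_sets lebesgue"
    and eq: "\<And>z. z \<notin> N \<Longrightarrow> f z = g z"
  shows "f \<in> borel_measurable lebesgue"
proof (rule measurableI)
  fix x show "f x \<in> space borel" by simp
next
  fix B :: "'b set" assume B: "B \<in> sets borel"
  have "f -` B \<inter> space lebesgue = ((g -` B \<inter> space lebesgue) - N) \<union> (f -` B \<inter> N)"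
    using eq by auto
  moreover have "(g -` B \<inter> space lebesgue) - N \<in> sets lebesgue"
  proof -
    have "g -` B \<inter> space lebesgue \<in> sets lebesgue" by (rule measurable_sets[OF g B])
    moreover have "N \<in> sets lebesgue" using N by auto
    ultimately show ?thesis by auto
  qed
  moreover have "f -` B \<inter> N \<in> sets lebesgue"
    using null_sets_completion_subset[of "f -` B \<inter> N" N lborel] N by auto
  ultimately show "f -` B \<inter> space lebesgue \<in> sets lebesgue" by (metis sets.Un)
qed

lemma floor_eventually:
  fixes e :: "nat \<Rightarrow> real"
  assumes y: "y \<notin> \<int>" and e: "e \<longlonglongrightarrow> 0"
  shows "\<forall>\<^sub>F j in sequentially. \<lfloor>y + e j\<rfloor> = \<lfloor>y\<rfloor>"
proof -
  have "y \<noteq> of_int \<lfloor>y\<rfloor>" using y by (metis Ints_of_int)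
  then have a: "of_int \<lfloor>y\<rfloor> < y" by (metis of_int_floor_le order_le_neq_trans)
  have b: "y < of_int \<lfloor>y\<rfloor> + 1" by simp
  define d where "d = min (y - of_int \<lfloor>y\<rfloor>) (of_int \<lfloor>y\<rfloor> + 1 - y)"
  have d: "d > 0" using a b unfolding d_def by simp
  have "\<forall>\<^sub>F j in sequentially. dist (e j) 0 < d" using e d by (simp add: tendsto_iff)
  then show ?thesis
  proof (rule eventually_mono)
    fix j assume "dist (e j) 0 < d"
    then have "\<bar>e j\<bar> < d" by simp
    then show "\<lfloor>y + e j\<rfloor> = \<lfloor>y\<rfloor>" unfolding d_def floor_eq_iff by (auto simp: abs_less_iff)
  qed
qed

lemma pc_meas:
  "piecewise_const h c ts V \<in> borel_measurable (borel :: (real\<times>real) measure)"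
proof -
  have "(\<lambda>z. (\<lambda>n k (z::real\<times>real). V n k) (time_index ts (snd z)) (cell_index h c (fst z)) z) \<in> borel_measurable borel"
    by (rule meas_idx) simp
  then show ?thesis unfolding piecewise_const_def[abs_def] by simp
qed

lemma pc_meas_shift:
  "(\<lambda>z. piecewise_const h c ts V (fst z + s, snd z)) \<in> borel_measurable (borel :: (real\<times>real) measure)"
proof -
  have "(\<lambda>z::real\<times>real. (fst z + s, snd z)) \<in> borel_measurable borel"
    by (intro borel_measurable_continuous_onI continuous_intros)
  from measurable_compose[OF this pc_meas[of h c ts V]] show ?thesis .
qed

lemma borel_to_lebesgue: "f \<in> borel_measurable (borel :: ('a::euclidean_space) measure) \<Longrightarrow> f \<in> borel_measurable lebesgue"
  by (rule measurable_completion) simp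

lemma eps_zero:
  fixes x K :: real
  assumes "\<And>e. 0 < e \<Longrightarrow> e \<le> 1 \<Longrightarrow> \<bar>x\<bar> \<le> e * K"
  shows "x = 0"
proof (rule ccontr)
  assume x: "x \<noteq> 0"
  have K: "0 < K" using assms[of 1] x by simp
  define e where "e = min 1 (\<bar>x\<bar> / (2 * K))"
  have e: "0 < e" "e \<le> 1" using x K unfolding e_def by auto
  have "e * K \<le> (\<bar>x\<bar> / (2 * K)) * K" unfolding e_def using K by (intro mult_right_mono) auto
  also have "\<dots> = \<bar>x\<bar> / 2" using K by simp
  finally show False using assms[OF e] x by simp
qed

lemma grid_null:
  assumes h0: "h0 > 0"
  shows "{z::real\<times>real. (fst z - c0) / h0 + 1/2 \<in> \<int>} \<in> null_sets lebesgue"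
proof -
  have b: "(1::real, 0::real) \<in> Basis" by (simp add: Basis_prod_def)
  have eq: "{z::real\<times>real. (fst z - c0) / h0 + 1/2 \<in> \<int>} = (\<Union>k\<in>(UNIV::int set). {z. z \<bullet> (1, 0) = c0 + (of_int k - 1/2) * h0})"
  proof (intro set_eqI iffI)
    fix z :: "real\<times>real" assume "z \<in> {z. (fst z - c0) / h0 + 1/2 \<in> \<int>}"
    then obtain k where k: "(fst z - c0) / h0 + 1/2 = of_int k" by (auto elim: Ints_cases)
    then have "fst z = c0 + (of_int k - 1/2) * h0" using h0 by (simp add: field_simps)
    then show "z \<in> (\<Union>k\<in>(UNIV::int set). {z. z \<bullet> (1, 0) = c0 + (of_int k - 1/2) * h0})"
      by (cases z) (auto simp: inner_prod_def)
  next
    fix z :: "real\<times>real" assume "z \<in> (\<Union>k\<in>(UNIV::int set). {z. z \<bullet> (1, 0) = c0 + (of_int k - 1/2) * h0})"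
    then obtain k where k: "fst z = c0 + (of_int k - 1/2) * h0" by (cases z) (auto simp: inner_prod_def)
    then have "(fst z - c0) / h0 + 1/2 = of_int k" using h0 by (simp add: field_simps)
    then show "z \<in> {z. (fst z - c0) / h0 + 1/2 \<in> \<int>}" by (metis (mono_tags) Ints_of_int mem_Collect_eq)
  qed
  have "negligible (\<Union>k\<in>(UNIV::int set). {z::real\<times>real. z \<bullet> (1, 0) = c0 + (of_int k - 1/2) * h0})"
    by (rule negligible_countable_Union) (auto intro: negligible_standard_hyperplane[OF b])
  then show ?thesis unfolding eq negligible_iff_null_sets .
qed

lemma shift_L1_zero:
  fixes V :: "nat \<Rightarrow> int \<Rightarrow> 'v::euclidean_space" and s :: "nat \<Rightarrow> real" and c0 a1 a2 b1 b2 :: real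
  assumes h0: "h0 > 0" and unb: "filterlim ts at_top sequentially" and s: "s \<longlonglongrightarrow> 0"
  defines "W \<equiv> \<lambda>j z. indicator (cbox (a1, a2) (b1, b2)) z * norm (piecewise_const h0 c0 ts V (fst z + s j, snd z) - piecewise_const h0 c0 ts V z)"
  shows "(\<lambda>j. integral\<^sup>L lebesgue (W j)) \<longlonglongrightarrow> 0" and "\<And>j. integrable lebesgue (W j)"
proof -
  obtain Sb where Sb: "\<And>j. norm (s j) \<le> Sb"
    using convergent_imp_Bseq[of s] s by (metis BseqE convergentI)
  define X where "X = \<bar>a1\<bar> + \<bar>b1\<bar> + Sb"
  obtain M0 where M0: "\<And>x t. \<bar>x\<bar> \<le> X \<Longrightarrow> t \<le> b2 \<Longrightarrow> norm (V (time_index ts t) (cell_index h0 c0 x)) \<le> M0"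
    using bounded_idx[OF h0 unb, of X b2 V c0] by blast
  have mW: "W j \<in> borel_measurable lebesgue" for j
  proof -
    have m1: "(\<lambda>z. piecewise_const h0 c0 ts V (fst z + s j, snd z)) \<in> borel_measurable borel" by (rule pc_meas_shift)
    have m2: "piecewise_const h0 c0 ts V \<in> borel_measurable borel" by (rule pc_meas)
    have m3: "(\<lambda>z. norm (piecewise_const h0 c0 ts V (fst z + s j, snd z) - piecewise_const h0 c0 ts V z)) \<in> borel_measurable borel"
      using measurable_compose[OF borel_measurable_diff[OF m1 m2] borel_measurable_norm] by simp
    have m4: "(indicator (cbox (a1, a2) (b1, b2)) :: real\<times>real \<Rightarrow> real) \<in> borel_measurable borel"
      by (intro borel_measurable_indicator) auto
    show ?thesis unfolding W_def by (intro borel_to_lebesgue borel_measurable_times m3 m4)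
  qed
  have bound: "norm (W j z) \<le> indicator (cbox (a1, a2) (b1, b2)) z * (2 * M0)" for j z
  proof (cases "z \<in> cbox (a1, a2) (b1, b2)")
    case True
    obtain x t where z: "z = (x,t)" by force
    have xt: "a1 \<le> x" "x \<le> b1" "t \<le> b2" using True z by (auto simp: cbox_Pair_eq)
    have "\<bar>s j\<bar> \<le> Sb" using Sb[of j] by simp
    then have x1: "\<bar>x + s j\<bar> \<le> X" "\<bar>x\<bar> \<le> X" using xt unfolding X_def by auto
    have "norm (piecewise_const h0 c0 ts V (x + s j, t) - piecewise_const h0 c0 ts V (x,t))
        \<le> norm (piecewise_const h0 c0 ts V (x + s j, t)) + norm (piecewise_const h0 c0 ts V (x,t))"
      by (rule norm_triangle_ineq4)
    also have "\<dots> \<le> M0 + M0" unfolding piecewise_const_def using M0 x1 xt by (intro add_mono) auto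
    finally show ?thesis using True z unfolding W_def by simp
  next
    case False then show ?thesis unfolding W_def by simp
  qed
  have M00: "0 \<le> M0" using M0[of 0 "min 0 b2"] unfolding X_def
    by (smt (verit, best) Sb norm_ge_zero)
  have iw: "integrable lebesgue (\<lambda>z. indicator (cbox (a1, a2) (b1, b2)) z * (2 * M0))"
  proof -
    have "emeasure lebesgue (cbox (a1, a2) (b1, b2)) < \<infinity>"
      using emeasure_lborel_cbox_finite by (simp add: emeasure_completion)
    then have "integrable lebesgue (indicator (cbox (a1, a2) (b1, b2)) :: real\<times>real \<Rightarrow> real)"
      by (intro integrable_real_indicator) auto
    then show ?thesis by (intro integrable_mult_left)
  qed
  define E where "E = {z::real\<times>real. (fst z - c0) / h0 + 1/2 \<in> \<int>}"
  have E: "E \<in> null_sets lebesgue" unfolding E_def by (rule grid_null[OF h0])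
  have lim: "AE z in lebesgue. (\<lambda>j. W j z) \<longlonglongrightarrow> 0"
  proof (rule AE_I'[OF E], safe)
    fix z assume nz: "\<not> (\<lambda>j. W j z) \<longlonglongrightarrow> 0"
    show "z \<in> E"
    proof (rule ccontr)
      assume "z \<notin> E"
      then have y: "(fst z - c0) / h0 + 1/2 \<notin> \<int>" unfolding E_def by simp
      have e: "(\<lambda>j. s j / h0) \<longlonglongrightarrow> 0" using tendsto_divide_zero[OF s, of h0] .
      have ev: "\<forall>\<^sub>F j in sequentially. \<lfloor>(fst z - c0) / h0 + 1/2 + s j / h0\<rfloor> = \<lfloor>(fst z - c0) / h0 + 1/2\<rfloor>"
        by (rule floor_eventually[OF y e])
      have "\<forall>\<^sub>F j in sequentially. W j z = 0"
      proof (rule eventually_mono[OF ev])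
        fix j assume a: "\<lfloor>(fst z - c0) / h0 + 1/2 + s j / h0\<rfloor> = \<lfloor>(fst z - c0) / h0 + 1/2\<rfloor>"
        have "(fst z + s j - c0) / h0 + 1/2 = (fst z - c0) / h0 + 1/2 + s j / h0" using h0 by (simp add: field_simps)
        then have "cell_index h0 c0 (fst z + s j) = cell_index h0 c0 (fst z)" unfolding cell_index_def using a by (simp add: add_ac)
        then show "W j z = 0" unfolding W_def piecewise_const_def by simp
      qed
      then have "(\<lambda>j. W j z) \<longlonglongrightarrow> 0" by (rule tendsto_eventually)
      then show False using nz by simp
    qed
  qed
  have "(\<lambda>j. integral\<^sup>L lebesgue (W j)) \<longlonglongrightarrow> integral\<^sup>L lebesgue (\<lambda>z::real\<times>real. 0::real)"
    by (rule Bochner_Integration.integral_dominated_convergence[where s=W and f="\<lambda>z. 0" and w="\<lambda>z. indicator (cbox (a1, a2) (b1, b2)) z * (2 * M0)"])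
       (use mW iw lim bound in auto)
  then show "(\<lambda>j. integral\<^sup>L lebesgue (W j)) \<longlonglongrightarrow> 0" by simp
  show "integrable lebesgue (W j)" for j
    by (rule Bochner_Integration.integrable_dominated_convergence2[where s=W and f="\<lambda>z. 0" and w="\<lambda>z. indicator (cbox (a1, a2) (b1, b2)) z * (2 * M0)"])
       (use mW iw lim bound in auto)
qed

lemma stencil_abs: "l \<in> stencil p \<Longrightarrow> \<bar>real_of_int l\<bar> \<le> real p"
  unfolding stencil_def by auto

lemma norm5: "norm (a + b + c + d + e) \<le> norm a + norm b + norm c + norm d + norm (e::'a::real_normed_vector)"
proof -
  have 1: "norm (a + b) \<le> norm a + norm b" by (rule norm_triangle_ineq)
  have 2: "norm (a + b + c) \<le> norm (a + b) + norm c" by (rule norm_triangle_ineq)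
  have 3: "norm (a + b + c + d) \<le> norm (a + b + c) + norm d" by (rule norm_triangle_ineq)
  have 4: "norm (a + b + c + d + e) \<le> norm (a + b + c + d) + norm e" by (rule norm_triangle_ineq)
  show ?thesis using 1 2 3 4 by linarith
qed

lemma dist_pair_le: "dist ((x::real), (t::real)) (x', t') \<le> \<bar>x - x'\<bar> + \<bar>t - t'\<bar>"
  unfolding dist_norm using norm_pair_le[of "x - x'" "t - t'"] by simp

lemma dec_gen:
  fixes U1 V1 F1 fu fV :: "'a::real_vector"
  shows "a *\<^sub>R U1 + b *\<^sub>R fu - (a' *\<^sub>R V1 + b' *\<^sub>R F1) =
    (a - a') *\<^sub>R V1 + a *\<^sub>R (U1 - V1) + (b - b') *\<^sub>R F1 + b *\<^sub>R (fu - fV) + b *\<^sub>R (fV - F1)"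
  by (simp add: algebra_simps)

lemma core:
  fixes f :: "real^'n \<Rightarrow> real^'n"
    and hh g :: "real^'n \<Rightarrow> real^'n \<Rightarrow> real^'n"
    and p :: nat and A :: "int \<Rightarrow> int \<Rightarrow> real" and \<alpha> :: real
    and hs cs :: "nat \<Rightarrow> real" and ts :: "nat \<Rightarrow> nat \<Rightarrow> real"
    and U :: "nat \<Rightarrow> nat \<Rightarrow> int \<Rightarrow> real^'n"
    and u :: "real \<times> real \<Rightarrow> real^'n"
  assumes p: "p \<ge> 1"
    and A_sum: "(\<Sum>l\<in>stencil p. \<Sum>m\<in>stencil p. A l m) = 1"
    and alpha: "0 \<le> \<alpha>" "\<alpha> \<le> 1"
    and hh_cons: "\<forall>a. hh a a = f a"
    and g_cons: "\<forall>a. g a a = f a"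
    and hh_lip: "\<exists>L. L-lipschitz_on UNIV (\<lambda>(a, b). hh a b)"
    and g_lip: "\<exists>L. L-lipschitz_on UNIV (\<lambda>(a, b). g a b)"
    and h_pos: "\<forall>j. hs j > 0"
    and h_lim: "hs \<longlonglongrightarrow> 0"
    and t0: "\<forall>j. ts j 0 = 0"
    and t_mono: "\<forall>j n. ts j n < ts j (Suc n)"
    and t_unbounded: "\<forall>j. filterlim (ts j) at_top sequentially"
    and dt_lim: "\<forall>\<epsilon>>0. \<forall>\<^sub>F j in sequentially. \<forall>n. ts j (Suc n) - ts j n < \<epsilon>"
    and scheme: "\<forall>j n k. U j (Suc n) k =
        U j n k + ((ts j (Suc n) - ts j n) / hs j) *\<^sub>R
          (num_flux p A \<alpha> hh g (U j n) (k - 1) - num_flux p A \<alpha> hh g (U j n) k)"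
    and conv: "\<exists>N\<in>null_sets lebesgue. \<forall>\<epsilon>>0. \<forall>\<^sub>F j in sequentially. \<forall>z.
                 snd z \<ge> 0 \<and> z \<notin> N \<longrightarrow>
                 norm (piecewise_const (hs j) (cs j) (ts j) (U j) z - u z) < \<epsilon>"
    and tf: "test_function \<phi> phx pht"
  shows "integrable lebesgue (\<lambda>z. pht z *\<^sub>R u z + phx z *\<^sub>R f (u z)) \<and>
         integral\<^sup>L lebesgue (\<lambda>z. pht z *\<^sub>R u z + phx z *\<^sub>R f (u z)) = 0"
proof -
  define Z where "Z = stencil p"
  have finZ: "finite Z" unfolding Z_def stencil_def by simp
  have Zb: "\<bar>real_of_int l\<bar> \<le> real p" if "l \<in> Z" for l using stencil_abs that unfolding Z_def by blast
  obtain Lh where hl: "Lh-lipschitz_on UNIV (\<lambda>(a, b). hh a b)" using hh_lip by blast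
  obtain Lg where gl: "Lg-lipschitz_on UNIV (\<lambda>(a, b). g a b)" using g_lip by blast
  have Lh0: "0 \<le> Lh" and Lg0: "0 \<le> Lg" using lip2(1)[OF hl] lip2(1)[OF gl] .
  define Lf where "Lf = 2 * Lh"
  have Lf0: "0 \<le> Lf" unfolding Lf_def using Lh0 by simp
  have flip: "norm (f a - f b) \<le> Lf * norm (a - b)" for a b
    using lip2(2)[OF hl, of a a b b] hh_cons unfolding Lf_def by simp
  define As where "As = (\<Sum>l\<in>Z. \<Sum>m\<in>Z. \<bar>A l m\<bar>)"
  have As0: "0 \<le> As" unfolding As_def by (intro sum_nonneg) auto
  define CF where "CF = 2 * (Lh + Lg) * As"
  have CF0: "0 \<le> CF" unfolding CF_def using Lh0 Lg0 As0 by simp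
  have nfb: "norm (num_flux p A \<alpha> hh g V k - f (V k)) \<le> CF * (\<Sum>l\<in>Z. norm (V (k + l) - V k))" for V k
    using numflux_bound[OF hl gl alpha hh_cons g_cons A_sum, of V k] unfolding CF_def As_def Z_def .
  have fcont: "continuous_on UNIV f"
  proof (rule lipschitz_on_continuous_on)
    show "Lf-lipschitz_on UNIV f"
      by (rule lipschitz_onI) (use flip Lf0 in \<open>auto simp: dist_norm\<close>)
  qed
  have fmeas: "f \<in> borel_measurable borel" by (rule borel_measurable_continuous_onI[OF fcont])
  obtain N where N: "N \<in> null_sets lebesgue" and cv: "\<And>\<epsilon>. \<epsilon> > 0 \<Longrightarrow> \<forall>\<^sub>F j in sequentially. \<forall>z.
                 snd z \<ge> 0 \<and> z \<notin> N \<longrightarrow> norm (piecewise_const (hs j) (cs j) (ts j) (U j) z - u z) < \<epsilon>"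
    using conv by blast
  define uj where "uj j = piecewise_const (hs j) (cs j) (ts j) (U j)" for j
  have cv': "\<exists>j0. \<forall>j\<ge>j0. \<forall>z. snd z \<ge> 0 \<and> z \<notin> N \<longrightarrow> norm (uj j z - u z) < \<epsilon>" if "\<epsilon> > 0" for \<epsilon>
    using cv[OF that] unfolding uj_def eventually_sequentially by blast
  obtain R \<delta> T where R0: "0 \<le> R" and d0: "0 < \<delta>" and dT: "\<delta> \<le> T"
    and sphi: "\<And>x t. \<phi> (x,t) \<noteq> 0 \<Longrightarrow> \<bar>x\<bar> \<le> R \<and> \<delta> \<le> t \<and> t \<le> T"
    and spt: "\<And>x t. pht (x,t) \<noteq> 0 \<Longrightarrow> \<bar>x\<bar> \<le> R \<and> \<delta> \<le> t \<and> t \<le> T"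
    and spx: "\<And>x t. phx (x,t) \<noteq> 0 \<Longrightarrow> \<bar>x\<bar> \<le> R \<and> \<delta> \<le> t \<and> t \<le> T"
    using test_props[OF tf] by metis
  have T0: "0 \<le> T" using d0 dT by simp
  have ct: "continuous_on UNIV pht" and cx: "continuous_on UNIV phx"
    using tf unfolding test_function_def by blast+
  have spt': "\<And>x t. pht (x,t) \<noteq> 0 \<Longrightarrow> \<bar>x\<bar> \<le> R \<and> \<bar>t\<bar> \<le> T" using spt d0 by force
  have spx': "\<And>x t. phx (x,t) \<noteq> 0 \<Longrightarrow> \<bar>x\<bar> \<le> R \<and> \<bar>t\<bar> \<le> T" using spx d0 by force
  obtain Bt where Bt: "\<And>z. \<bar>pht z\<bar> \<le> Bt" using uc_zero_outside(2)[OF R0 T0 ct spt'] by blast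
  obtain Bx where Bx: "\<And>z. \<bar>phx z\<bar> \<le> Bx" using uc_zero_outside(2)[OF R0 T0 cx spx'] by blast
  define P where "P = max Bt Bx"
  have Pt: "\<And>z. \<bar>pht z\<bar> \<le> P" and Px: "\<And>z. \<bar>phx z\<bar> \<le> P"
    unfolding P_def using Bt Bx by (meson max.coboundedI1 max.coboundedI2)+
  have P0: "0 \<le> P" using Pt[of 0] by simp
  note UCt = uc_zero_outside(1)[OF R0 T0 ct spt']
  note UCx = uc_zero_outside(1)[OF R0 T0 cx spx']
  have ptz: "pht z = 0 \<and> phx z = 0" if "\<not> (\<bar>fst z\<bar> \<le> R \<and> \<delta> \<le> snd z \<and> snd z \<le> T)" for z
    using that spt[of "fst z" "snd z"] spx[of "fst z" "snd z"] by auto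
  define X where "X = R + 1 + real p"
  have X0: "0 \<le> X" unfolding X_def using R0 by simp
  obtain j1a where j1a: "\<forall>j\<ge>j1a. \<forall>z. snd z \<ge> 0 \<and> z \<notin> N \<longrightarrow> norm (uj j z - u z) < 1"
    using cv'[of 1] by auto
  define j1 where "j1 = j1a"
  have j1: "\<And>z. snd z \<ge> 0 \<Longrightarrow> z \<notin> N \<Longrightarrow> norm (uj j1 z - u z) < 1"
    using j1a unfolding j1_def by auto
  obtain M1 where M1: "\<And>x t. \<bar>x\<bar> \<le> X \<Longrightarrow> t \<le> T \<Longrightarrow> norm (U j1 (time_index (ts j1) t) (cell_index (hs j1) (cs j1) x)) \<le> M1"
    using bounded_idx[of "hs j1" "ts j1" X T "U j1" "cs j1"] h_pos t_unbounded by blast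
  define B where "B = M1 + 1"
  have "norm (U j1 (time_index (ts j1) 0) (cell_index (hs j1) (cs j1) 0)) \<le> M1" using M1[of 0 0] X0 T0 by simp
  then have "0 \<le> M1" using norm_ge_zero order_trans by blast
  then have B0: "0 \<le> B" unfolding B_def by simp
  have uB: "norm (u z) \<le> B" if "\<bar>fst z\<bar> \<le> X" "0 \<le> snd z" "snd z \<le> T" "z \<notin> N" for z
  proof -
    have "norm (uj j1 z) \<le> M1" unfolding uj_def piecewise_const_def using M1 that by simp
    moreover have "norm (uj j1 z - u z) < 1" using j1 that by simp
    moreover have "norm (u z) \<le> norm (uj j1 z) + norm (u z - uj j1 z)" by (rule norm_triangle_sub)
    moreover have "norm (u z - uj j1 z) = norm (uj j1 z - u z)" by (rule norm_minus_commute)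
    ultimately show ?thesis unfolding B_def by linarith
  qed
  define \<Phi>u where "\<Phi>u z = pht z *\<^sub>R u z + phx z *\<^sub>R f (u z)" for z
  define S where "S = cbox (- (R + 1), 0) (R + 1, T)"
  have memS: "z \<in> S \<longleftrightarrow> \<bar>fst z\<bar> \<le> R + 1 \<and> 0 \<le> snd z \<and> snd z \<le> T" for z
    unfolding S_def by (cases z) (auto simp: cbox_Pair_eq abs_le_iff)
  have SL: "S \<in> sets lebesgue" unfolding S_def by auto
  have Sfin: "emeasure lebesgue S < \<infinity>"
    unfolding S_def using emeasure_lborel_cbox_finite by (simp add: emeasure_completion)
  have iS: "integrable lebesgue (\<lambda>z. indicator S z :: real)"
    using SL Sfin by (intro integrable_real_indicator) auto
  define \<mu>S where "\<mu>S = integral\<^sup>L lebesgue (\<lambda>z. indicator S z :: real)"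
  have ujm: "uj j \<in> borel_measurable lebesgue" for j unfolding uj_def by (intro borel_to_lebesgue pc_meas)
  define ut where "ut z = lim (\<lambda>j. uj j z)" for z
  have utm: "ut \<in> borel_measurable lebesgue" unfolding ut_def by (rule borel_measurable_lim_metric[OF ujm])
  have conv_pt: "(\<lambda>j. uj j z) \<longlonglongrightarrow> u z" if "snd z \<ge> 0" "z \<notin> N" for z
  proof (rule tendstoI)
    fix e :: real assume e: "e > 0"
    obtain j0 where "\<forall>j\<ge>j0. \<forall>z. snd z \<ge> 0 \<and> z \<notin> N \<longrightarrow> norm (uj j z - u z) < e" using cv'[OF e] by blast
    then have "\<forall>j\<ge>j0. norm (uj j z - u z) < e" using that by blast
    then show "\<forall>\<^sub>F j in sequentially. dist (uj j z) (u z) < e"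
      unfolding eventually_sequentially by (auto simp: dist_norm)
  qed
  have ut_eq: "ut z = u z" if "snd z \<ge> 0" "z \<notin> N" for z
    unfolding ut_def using conv_pt[OF that] by (rule limI)
  define g0 where "g0 z = pht z *\<^sub>R ut z + phx z *\<^sub>R f (ut z)" for z
  have ptm: "pht \<in> borel_measurable lebesgue" "phx \<in> borel_measurable lebesgue"
    using ct cx by (auto intro!: borel_to_lebesgue borel_measurable_continuous_onI)
  have fut: "(\<lambda>z. f (ut z)) \<in> borel_measurable lebesgue"
    using measurable_compose[OF utm fmeas] by (simp add: o_def)
  have g0m: "g0 \<in> borel_measurable lebesgue"
    unfolding g0_def by (intro borel_measurable_add borel_measurable_scaleR ptm utm fut)
  have \<Phi>g0: "\<Phi>u z = g0 z" if "z \<notin> N" for z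
  proof (cases "snd z \<ge> 0")
    case True then show ?thesis unfolding \<Phi>u_def g0_def using ut_eq[OF True that] by simp
  next
    case False then have "pht z = 0 \<and> phx z = 0" using d0 by (intro ptz) auto
    then show ?thesis unfolding \<Phi>u_def g0_def by simp
  qed
  have \<Phi>m: "\<Phi>u \<in> borel_measurable lebesgue" by (rule meas_ae_eq_lebesgue[OF g0m N \<Phi>g0])
  define K\<Phi> where "K\<Phi> = P * B + P * (norm (f 0) + Lf * B)"
  have K\<Phi>0: "0 \<le> K\<Phi>" unfolding K\<Phi>_def using P0 B0 Lf0 by simp
  have fb: "norm (f a) \<le> norm (f 0) + Lf * norm a" for a
  proof -
    have "norm (f a) \<le> norm (f 0) + norm (f a - f 0)" by (metis add.commute norm_triangle_sub)
    then show ?thesis using flip[of a 0] by simp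
  qed
  have \<Phi>b: "norm (\<Phi>u z) \<le> norm (indicator S z * K\<Phi>)" if "z \<notin> N" for z
  proof (cases "\<bar>fst z\<bar> \<le> R \<and> \<delta> \<le> snd z \<and> snd z \<le> T")
    case True
    then have zS: "z \<in> S" using memS d0 by auto
    have ub: "norm (u z) \<le> B" using uB[of z] True that d0 unfolding X_def by auto
    have "norm (\<Phi>u z) \<le> \<bar>pht z\<bar> * norm (u z) + \<bar>phx z\<bar> * norm (f (u z))"
      unfolding \<Phi>u_def by (metis norm_scaleR norm_triangle_ineq real_norm_def)
    also have "\<dots> \<le> P * B + P * (norm (f 0) + Lf * B)"
    proof -
      have "Lf * norm (u z) \<le> Lf * B" using ub Lf0 by (rule mult_left_mono)
      then have "norm (f (u z)) \<le> norm (f 0) + Lf * B" using fb[of "u z"] by linarith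
      then show ?thesis using Pt[of z] Px[of z] ub P0 Lf0 by (intro add_mono mult_mono) auto
    qed
    finally show ?thesis using zS K\<Phi>0 unfolding K\<Phi>_def by simp
  next
    case False then show ?thesis using ptz[OF False] K\<Phi>0 unfolding \<Phi>u_def by simp
  qed
  have iK: "integrable lebesgue (\<lambda>z. indicator S z * K\<Phi>)" using iS by (rule integrable_mult_left)
  have \<Phi>int: "integrable lebesgue \<Phi>u"
  proof (rule Bochner_Integration.integrable_bound[OF iK \<Phi>m])
    show "AE z in lebesgue. norm (\<Phi>u z) \<le> norm (indicator S z * K\<Phi>)"
      by (rule AE_I'[OF N]) (use \<Phi>b in auto)
  qed

  define Nb where "Nb = (\<Union>jl\<in>(UNIV :: (nat \<times> int) set). (+) (- (of_int (snd jl) * hs (fst jl)), 0) ` N)"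
  have Nb: "Nb \<in> null_sets lebesgue"
    unfolding Nb_def
  proof (rule null_sets_UN')
    fix jl :: "nat \<times> int"
    have "negligible N" using N by (simp add: negligible_iff_null_sets)
    then have "negligible ((+) (- (of_int (snd jl) * hs (fst jl)), 0) ` N)" by (rule negligible_translation)
    then show "(+) (- (of_int (snd jl) * hs (fst jl)), 0::real) ` N \<in> null_sets lebesgue"
      by (simp add: negligible_iff_null_sets)
  qed auto
  have Nbs: "(fst z + of_int l * hs j, snd z) \<notin> N" if "z \<notin> Nb" for z l j
  proof
    assume a: "(fst z + of_int l * hs j, snd z) \<in> N"
    have "z = (- (of_int l * hs j), 0) + (fst z + of_int l * hs j, snd z)" by (cases z) simp
    then have "z \<in> (+) (- (of_int (snd (j,l)) * hs (fst (j,l))), 0) ` N" using a by (metis fst_conv snd_conv image_eqI)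
    then show False using that unfolding Nb_def by blast
  qed
  have NbN: "z \<notin> N" if "z \<notin> Nb" for z using Nbs[OF that, of 0 0] by simp
  define BF where "BF = norm (f 0) + Lf * (B + 1) + CF * (real (card Z) * (2 * (B + 1)))"
  define K1 where "K1 = (B + 1) + P + BF + P * Lf + P * CF * (4 * real (card Z))"
  define K2 where "K2 = P * CF"
  define Kfin where "Kfin = K1 * \<mu>S + K2 * real (card Z)"
  have est: "norm (integral\<^sup>L lebesgue \<Phi>u) \<le> e * Kfin" if e0: "0 < e" and e1: "e \<le> 1" for e
  proof -
    obtain dt where dt: "dt > 0" "\<And>z z'. dist z z' < dt \<Longrightarrow> \<bar>pht z - pht z'\<bar> < e" using UCt e0 by blast
    obtain dx where dx: "dx > 0" "\<And>z z'. dist z z' < dx \<Longrightarrow> \<bar>phx z - phx z'\<bar> < e" using UCx e0 by blast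
    obtain j0a where j0a: "\<forall>j\<ge>j0a. \<forall>z. snd z \<ge> 0 \<and> z \<notin> N \<longrightarrow> norm (uj j z - u z) < e"
      using cv'[OF e0] by auto
    define j0 where "j0 = j0a"
    have E0: "\<And>z. snd z \<ge> 0 \<Longrightarrow> z \<notin> N \<Longrightarrow> norm (uj j0 z - u z) < e"
      using j0a unfolding j0_def by auto
    define W where "W l j z = indicator S z * norm (uj j0 (fst z + of_int l * hs j, snd z) - uj j0 z)" for l j z
    have Wlim: "(\<lambda>j. integral\<^sup>L lebesgue (W l j)) \<longlonglongrightarrow> 0" and Wint: "integrable lebesgue (W l j)" for l j
    proof -
      have s: "(\<lambda>j. of_int l * hs j) \<longlonglongrightarrow> 0" using tendsto_mult_right_zero[OF h_lim] by simp
      note SL1 = shift_L1_zero[where ?h0.0="hs j0" and ts="ts j0" and s="\<lambda>j. of_int l * hs j" and V="U j0"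
         and ?a1.0="- (R + 1)" and ?a2.0=0 and ?b1.0="R + 1" and ?b2.0=T and ?c0.0="cs j0"]
      have "W l = (\<lambda>j z. indicator (cbox (- (R + 1), 0) (R + 1, T)) z *
          norm (piecewise_const (hs j0) (cs j0) (ts j0) (U j0) (fst z + of_int l * hs j, snd z) -
                piecewise_const (hs j0) (cs j0) (ts j0) (U j0) z))"
        unfolding W_def S_def uj_def by (intro ext) simp
      then show "(\<lambda>j. integral\<^sup>L lebesgue (W l j)) \<longlonglongrightarrow> 0" "integrable lebesgue (W l j)"
        using SL1 h_pos t_unbounded s by auto
    qed
    have ev1: "\<forall>\<^sub>F j in sequentially. \<forall>z. snd z \<ge> 0 \<and> z \<notin> N \<longrightarrow> norm (uj j z - u z) < e"
      using cv[OF e0] unfolding uj_def .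
    have ev2: "\<forall>\<^sub>F j in sequentially. \<forall>l\<in>Z. integral\<^sup>L lebesgue (W l j) < e"
      using finZ by (rule eventually_ball_finite) (use Wlim e0 order_tendstoD(2) in blast)
    have ev3: "\<forall>\<^sub>F j in sequentially. hs j < min (min dt (dx / 2)) 1"
    proof -
      have "0 < min (min dt (dx / 2)) (1::real)" using dt dx by simp
      then show ?thesis using order_tendstoD(2)[OF h_lim] by blast
    qed
    have ev4: "\<forall>\<^sub>F j in sequentially. \<forall>n. ts j (Suc n) - ts j n < dx / 2"
    proof -
      have "0 < dx / 2" using dx by simp
      then show ?thesis using dt_lim by blast
    qed
    have "\<forall>\<^sub>F j in sequentially. (\<forall>z. snd z \<ge> 0 \<and> z \<notin> N \<longrightarrow> norm (uj j z - u z) < e) \<and>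
        (\<forall>l\<in>Z. integral\<^sup>L lebesgue (W l j) < e) \<and> hs j < min (min dt (dx / 2)) 1 \<and> (\<forall>n. ts j (Suc n) - ts j n < dx / 2)"
      by (intro eventually_conj ev1 ev2 ev3 ev4)
    then obtain j where E1: "\<And>z. snd z \<ge> 0 \<Longrightarrow> z \<notin> N \<Longrightarrow> norm (uj j z - u z) < e"
      and E2: "\<And>l. l \<in> Z \<Longrightarrow> integral\<^sup>L lebesgue (W l j) < e"
      and E3: "hs j < min (min dt (dx / 2)) 1" and E4: "\<And>n. ts j (Suc n) - ts j n < dx / 2"
      unfolding eventually_sequentially by blast
    define h where "h = hs j"
    define c where "c = cs j"
    have h0: "h > 0" unfolding h_def using h_pos by simp
    have h1: "h < 1" "h < dt" "h < dx / 2" using E3 unfolding h_def by auto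
    have monoj: "\<forall>n. ts j n < ts j (Suc n)" using t_mono by simp
    have t0j: "ts j 0 = 0" using t0 by simp
    have unbj: "filterlim (ts j) at_top sequentially" using t_unbounded by simp
    define G where "G = Gfun phx pht h c (ts j) (U j) (\<lambda>n. num_flux p A \<alpha> hh g (U j n))"
    have schj: "U j (Suc n) k = U j n k + ((ts j (Suc n) - ts j n) / h) *\<^sub>R
        (num_flux p A \<alpha> hh g (U j n) (k - 1) - num_flux p A \<alpha> hh g (U j n) k)" for n k
      using scheme unfolding h_def by simp
    have GI: "integrable lebesgue G \<and> integral\<^sup>L lebesgue G = 0"
      unfolding G_def by (rule G_integral_zero[where V="U j" and F="\<lambda>n. num_flux p A \<alpha> hh g (U j n)", OF tf h0 monoj t0j unbj schj])
    define bnd where "bnd z = indicator S z * (e * K1) + K2 * (\<Sum>l\<in>Z. W l j z)" for z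
    have pw: "norm (\<Phi>u z - G z) \<le> bnd z" if zNb: "z \<notin> Nb" for z
    proof -
      obtain x t where z: "z = (x,t)" by force
      have zN: "z \<notin> N" by (rule NbN[OF zNb])
      show ?thesis
      proof (cases "z \<in> S")
        case False
        have W0: "W l j z = 0" for l unfolding W_def using False by simp
        have bnd0: "bnd z = 0" unfolding bnd_def using False W0 by simp
        have out: "R + 1 < \<bar>x\<bar> \<or> t < 0 \<or> T < t" using False memS[of z] z by auto
        have \<Phi>0: "\<Phi>u z = 0"
        proof -
          have "\<not> (\<bar>fst z\<bar> \<le> R \<and> \<delta> \<le> snd z \<and> snd z \<le> T)" using out z d0 by auto
          then show ?thesis using ptz[of z] unfolding \<Phi>u_def by simp
        qed
        have G0: "G z = 0"
        proof (cases "t < 0")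
          case True then show ?thesis unfolding G_def Gfun_def z by simp
        next
          case False
          define n where "n = time_index (ts j) t"
          define k where "k = cell_index h c x"
          have xw: "\<bar>x - midpt h c k\<bar> \<le> h/2" unfolding k_def by (rule midpt_cell[OF h0])
          have tt: "ts j n \<le> t \<and> t < ts j (Suc n)" unfolding n_def using time_index_props[OF monoj t0j unbj] False by simp
          have o2: "R + 1 < \<bar>x\<bar> \<or> T < t" using out False by auto
          have a: "pht (midpt h c k, t) = 0"
          proof (rule ccontr)
            assume "pht (midpt h c k, t) \<noteq> 0"
            then have "\<bar>midpt h c k\<bar> \<le> R \<and> t \<le> T" using spt by blast
            moreover have "\<bar>x\<bar> \<le> \<bar>x - midpt h c k\<bar> + \<bar>midpt h c k\<bar>" by (metis abs_triangle_ineq diff_add_cancel)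
            ultimately show False using o2 xw h1 by linarith
          qed
          have b: "phx (x + h/2, ts j (Suc n)) = 0"
          proof (rule ccontr)
            assume "phx (x + h/2, ts j (Suc n)) \<noteq> 0"
            then have "\<bar>x + h/2\<bar> \<le> R \<and> ts j (Suc n) \<le> T" using spx by blast
            then show False using o2 tt h1 h0 by (auto simp: abs_le_iff)
          qed
          show ?thesis unfolding G_def Gfun_def z using False a b by (simp add: n_def k_def)
        qed
        show ?thesis using \<Phi>0 G0 bnd0 by simp
      next
        case True
        then have xS: "\<bar>x\<bar> \<le> R + 1" "0 \<le> t" "t \<le> T" using memS[of z] z by auto
        define n where "n = time_index (ts j) t"
        define k where "k = cell_index h c x"
        define w where "w = midpt h c k"
        define \<tau> where "\<tau> = ts j (Suc n)"
        define V where "V = U j n"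
        define Fv where "Fv = num_flux p A \<alpha> hh g V k"
        have xw: "\<bar>x - w\<bar> \<le> h/2" unfolding w_def k_def by (rule midpt_cell[OF h0])
        have tt: "ts j n \<le> t \<and> t < \<tau>" unfolding n_def \<tau>_def using time_index_props[OF monoj t0j unbj] xS by simp
        have Gz: "G z = pht (w,t) *\<^sub>R V k + phx (x + h/2, \<tau>) *\<^sub>R Fv"
          unfolding G_def Gfun_def z using xS by (simp add: n_def k_def w_def \<tau>_def V_def Fv_def)
        have ujz: "uj j z = V k" unfolding uj_def piecewise_const_def z V_def n_def k_def h_def c_def by simp
        have ujl: "uj j (x + of_int l * h, t) = V (k + l)" for l
          unfolding uj_def piecewise_const_def V_def n_def k_def using cell_index_shift[OF h0, of c x l]
          by (simp add: h_def c_def)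
        have zlN: "(x + of_int l * h, t) \<notin> N" for l using Nbs[OF zNb, of l j] z by (simp add: h_def)
        have xl: "\<bar>x + of_int l * h\<bar> \<le> X" if "l \<in> Z" for l
        proof -
          have "\<bar>of_int l * h\<bar> = \<bar>of_int l\<bar> * h" using h0 by (simp add: abs_mult)
          also have "\<dots> \<le> real p * 1" using Zb[OF that] h0 h1 by (intro mult_mono) auto
          finally show ?thesis using xS unfolding X_def by (simp add: abs_le_iff)
        qed
        have Vb: "norm (V (k + l)) \<le> B + 1" if "l \<in> Z" for l
        proof -
          have "norm (u (x + of_int l * h, t)) \<le> B" using uB xl[OF that] xS zlN by simp
          moreover have "norm (uj j (x + of_int l * h, t) - u (x + of_int l * h, t)) < e" using E1 zlN xS by simp
          moreover have "norm (uj j (x + of_int l * h, t)) \<le> norm (u (x + of_int l * h, t)) + norm (uj j (x + of_int l * h, t) - u (x + of_int l * h, t))"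
            by (rule norm_triangle_sub)
          ultimately show ?thesis using ujl e1 by simp
        qed
        have Z0: "0 \<in> Z" unfolding Z_def stencil_def using p by simp
        have Vk: "norm (V k) \<le> B + 1" using Vb[OF Z0] by simp
        have Vd: "norm (V (k + l) - V k) \<le> 4 * e + W l j z" if "l \<in> Z" for l
        proof -
          define zl where "zl = (x + of_int l * h, t)"
          have a1: "norm (uj j zl - u zl) < e" unfolding zl_def using E1 zlN xS by simp
          have a2: "norm (u zl - uj j0 zl) < e" unfolding zl_def using E0 zlN xS by (simp add: norm_minus_commute)
          have a4: "norm (uj j0 z - u z) < e" using E0 zN xS z by simp
          have a5: "norm (u z - uj j z) < e" using E1 zN xS z by (simp add: norm_minus_commute)
          have a3: "W l j z = norm (uj j0 zl - uj j0 z)" unfolding W_def zl_def using True z by (simp add: h_def)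
          have eqv: "V (k + l) - V k = (uj j zl - u zl) + (u zl - uj j0 zl) + (uj j0 zl - uj j0 z) + (uj j0 z - u z) + (u z - uj j z)"
            using ujl[of l] ujz unfolding zl_def by simp
          have "norm (V (k + l) - V k) \<le> norm (uj j zl - u zl) + norm (u zl - uj j0 zl) + norm (uj j0 zl - uj j0 z) + norm (uj j0 z - u z) + norm (u z - uj j z)"
            unfolding eqv by (rule norm5)
          then show ?thesis using a1 a2 a3 a4 a5 by linarith
        qed
        define SD where "SD = (\<Sum>l\<in>Z. norm (V (k + l) - V k))"
        have SD1: "SD \<le> 4 * e * real (card Z) + (\<Sum>l\<in>Z. W l j z)"
        proof -
          have "SD \<le> (\<Sum>l\<in>Z. 4 * e + W l j z)" unfolding SD_def by (intro sum_mono Vd)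
          also have "\<dots> = 4 * e * real (card Z) + (\<Sum>l\<in>Z. W l j z)" by (simp add: sum.distrib)
          finally show ?thesis .
        qed
        have SD2: "SD \<le> real (card Z) * (2 * (B + 1))"
        proof -
          have "SD \<le> (\<Sum>l\<in>Z. 2 * (B + 1))" unfolding SD_def
          proof (intro sum_mono)
            fix l assume l: "l \<in> Z"
            have "norm (V (k + l) - V k) \<le> norm (V (k + l)) + norm (V k)" by (rule norm_triangle_ineq4)
            then show "norm (V (k + l) - V k) \<le> 2 * (B + 1)" using Vb[OF l] Vk by simp
          qed
          then show ?thesis by simp
        qed
        have Ff: "norm (Fv - f (V k)) \<le> CF * SD" unfolding Fv_def SD_def by (rule nfb)
        have Fvb: "norm Fv \<le> BF"
        proof -
          have "norm Fv \<le> norm (f (V k)) + norm (Fv - f (V k))" by (rule norm_triangle_sub)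
          moreover have "norm (f (V k)) \<le> norm (f 0) + Lf * (B + 1)"
            using fb[of "V k"] mult_left_mono[OF Vk Lf0] by linarith
          moreover have "CF * SD \<le> CF * (real (card Z) * (2 * (B + 1)))" using SD2 CF0 by (rule mult_left_mono)
          ultimately show ?thesis unfolding BF_def using Ff by linarith
        qed
        have ptd: "\<bar>pht z - pht (w,t)\<bar> < e"
        proof (rule dt(2))
          have "dist z (w,t) \<le> \<bar>x - w\<bar> + \<bar>t - t\<bar>" unfolding z by (rule dist_pair_le)
          then show "dist z (w,t) < dt" using xw h1 h0 by simp
        qed
        have pxd: "\<bar>phx z - phx (x + h/2, \<tau>)\<bar> < e"
        proof (rule dx(2))
          have "dist z (x + h/2, \<tau>) \<le> \<bar>x - (x + h/2)\<bar> + \<bar>t - \<tau>\<bar>" unfolding z by (rule dist_pair_le)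
          moreover have "\<tau> - t < dx / 2" using E4[of n] tt unfolding \<tau>_def by simp
          ultimately show "dist z (x + h/2, \<tau>) < dx" using h0 h1 tt by (simp add: abs_le_iff)
        qed
        have ue: "norm (u z - V k) < e"
        proof -
          have "norm (uj j z - u z) < e" using E1 zN xS z by simp
          then show ?thesis using ujz by (simp add: norm_minus_commute)
        qed
        have fe: "norm (f (u z) - f (V k)) \<le> Lf * e"
          using flip[of "u z" "V k"] mult_left_mono[OF less_imp_le[OF ue] Lf0] by linarith
        have dec: "\<Phi>u z - G z = (pht z - pht (w,t)) *\<^sub>R V k + pht z *\<^sub>R (u z - V k) + (phx z - phx (x + h/2, \<tau>)) *\<^sub>R Fv
            + phx z *\<^sub>R (f (u z) - f (V k)) + phx z *\<^sub>R (f (V k) - Fv)"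
          unfolding \<Phi>u_def Gz by (rule dec_gen)
        have t1: "norm ((pht z - pht (w,t)) *\<^sub>R V k) \<le> e * (B + 1)"
          unfolding norm_scaleR real_norm_def using ptd Vk e0 by (intro mult_mono) auto
        have t2: "norm (pht z *\<^sub>R (u z - V k)) \<le> P * e"
          unfolding norm_scaleR real_norm_def using Pt[of z] ue P0 by (intro mult_mono) auto
        have t3: "norm ((phx z - phx (x + h/2, \<tau>)) *\<^sub>R Fv) \<le> e * BF"
          unfolding norm_scaleR real_norm_def using pxd Fvb e0 by (intro mult_mono) auto
        have t4: "norm (phx z *\<^sub>R (f (u z) - f (V k))) \<le> P * (Lf * e)"
          unfolding norm_scaleR real_norm_def using Px[of z] fe P0 by (intro mult_mono) auto
        have t5: "norm (phx z *\<^sub>R (f (V k) - Fv)) \<le> P * (CF * (4 * e * real (card Z) + (\<Sum>l\<in>Z. W l j z)))"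
        proof -
          have "norm (f (V k) - Fv) = norm (Fv - f (V k))" by (rule norm_minus_commute)
          moreover have "CF * SD \<le> CF * (4 * e * real (card Z) + (\<Sum>l\<in>Z. W l j z))" using SD1 CF0 by (rule mult_left_mono)
          ultimately have "norm (f (V k) - Fv) \<le> CF * (4 * e * real (card Z) + (\<Sum>l\<in>Z. W l j z))" using Ff by linarith
          then show ?thesis unfolding norm_scaleR real_norm_def using Px[of z] P0 by (intro mult_mono) auto
        qed
        have "norm (\<Phi>u z - G z) \<le> e * (B + 1) + P * e + e * BF + P * (Lf * e) + P * (CF * (4 * e * real (card Z) + (\<Sum>l\<in>Z. W l j z)))"
          unfolding dec by (rule order_trans[OF norm5]) (intro add_mono t1 t2 t3 t4 t5)
        also have "\<dots> = bnd z"
        proof -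
          define SW where "SW = (\<Sum>l\<in>Z. W l j z)"
          have ind: "indicator S z = (1::real)" using True by simp
          have "e * (B + 1) + P * e + e * BF + P * (Lf * e) + P * (CF * (4 * e * real (card Z) + SW)) = e * K1 + K2 * SW"
            unfolding K1_def K2_def by (simp add: algebra_simps)
          moreover have "bnd z = e * K1 + K2 * SW" unfolding bnd_def SW_def ind by simp
          ultimately show ?thesis unfolding SW_def by simp
        qed
        finally show ?thesis .
      qed
    qed
    have ibnd: "integrable lebesgue bnd"
      unfolding bnd_def using iS Wint by (intro Bochner_Integration.integrable_add integrable_mult_right integrable_mult_left integrable_sum) auto
    have idiff: "integrable lebesgue (\<lambda>z. \<Phi>u z - G z)"
      using \<Phi>int GI by (intro Bochner_Integration.integrable_diff) auto
    have "integral\<^sup>L lebesgue \<Phi>u = integral\<^sup>L lebesgue \<Phi>u - integral\<^sup>L lebesgue G" using GI by simp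
    also have "\<dots> = integral\<^sup>L lebesgue (\<lambda>z. \<Phi>u z - G z)"
      using \<Phi>int GI by (intro Bochner_Integration.integral_diff[symmetric]) auto
    finally have "norm (integral\<^sup>L lebesgue \<Phi>u) = norm (integral\<^sup>L lebesgue (\<lambda>z. \<Phi>u z - G z))" by simp
    also have "\<dots> \<le> integral\<^sup>L lebesgue (\<lambda>z. norm (\<Phi>u z - G z))" by (rule integral_norm_bound)
    also have "\<dots> \<le> integral\<^sup>L lebesgue bnd"
      using idiff ibnd pw by (intro integral_mono_AE) (auto intro!: AE_I'[OF Nb])
    also have "\<dots> = e * K1 * \<mu>S + K2 * (\<Sum>l\<in>Z. integral\<^sup>L lebesgue (W l j))"
      unfolding bnd_def \<mu>S_def using iS Wint
      by (subst Bochner_Integration.integral_add) (auto simp: integral_sum mult.commute)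
    also have "\<dots> \<le> e * K1 * \<mu>S + K2 * (\<Sum>l\<in>Z. e)"
      using E2 P0 CF0 unfolding K2_def by (intro add_left_mono mult_left_mono sum_mono) (auto intro: less_imp_le)
    also have "\<dots> = e * Kfin" unfolding Kfin_def by (simp add: algebra_simps)
    finally show ?thesis .
  qed
  have "integral\<^sup>L lebesgue \<Phi>u = 0"
  proof -
    have "norm (integral\<^sup>L lebesgue \<Phi>u) = 0"
      by (rule eps_zero) (use est in simp)
    then show ?thesis by simp
  qed
  then show ?thesis using \<Phi>int unfolding \<Phi>u_def by simp
qed

theorem mainTheorem5:
  fixes f :: "real^'n \<Rightarrow> real^'n"
    and hh g :: "real^'n \<Rightarrow> real^'n \<Rightarrow> real^'n"
    and p :: nat and A :: "int \<Rightarrow> int \<Rightarrow> real" and \<alpha> :: real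
    and hs cs :: "nat \<Rightarrow> real" and ts :: "nat \<Rightarrow> nat \<Rightarrow> real"
    and U :: "nat \<Rightarrow> nat \<Rightarrow> int \<Rightarrow> real^'n"
    and u :: "real \<times> real \<Rightarrow> real^'n"
  assumes p: "p \<ge> 1"
    and A_diag: "\<forall>l\<in>stencil p. A l l = 0"
    and A_sum: "(\<Sum>l\<in>stencil p. \<Sum>m\<in>stencil p. A l m) = 1"
    and alpha: "0 \<le> \<alpha>" "\<alpha> \<le> 1"
    and hh_cons: "\<forall>a. hh a a = f a"
    and g_cons: "\<forall>a. g a a = f a"
    and hh_lip: "\<exists>L. L-lipschitz_on UNIV (\<lambda>(a, b). hh a b)"
    and g_lip: "\<exists>L. L-lipschitz_on UNIV (\<lambda>(a, b). g a b)"
    and h_pos: "\<forall>j. hs j > 0"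
    and h_lim: "hs \<longlonglongrightarrow> 0"
    and t0: "\<forall>j. ts j 0 = 0"
    and t_mono: "\<forall>j n. ts j n < ts j (Suc n)"
    and t_unbounded: "\<forall>j. filterlim (ts j) at_top sequentially"
    and dt_lim: "\<forall>\<epsilon>>0. \<forall>\<^sub>F j in sequentially. \<forall>n. ts j (Suc n) - ts j n < \<epsilon>"
    and scheme: "\<forall>j n k. U j (Suc n) k =
        U j n k + ((ts j (Suc n) - ts j n) / hs j) *\<^sub>R
          (num_flux p A \<alpha> hh g (U j n) (k - 1) - num_flux p A \<alpha> hh g (U j n) k)"
    and osc: "\<forall>n. (\<forall>\<^sub>F j in sequentially.
                   (\<lambda>k. local_osc p (hs j) (cs j) (ts j) (U j) n k) summable_on UNIV) \<and>
               ((\<lambda>j. hs j * infsum (\<lambda>k. local_osc p (hs j) (cs j) (ts j) (U j) n k) UNIV)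
                  \<longlonglongrightarrow> 0)"
    and conv: "\<exists>N\<in>null_sets lebesgue. \<forall>\<epsilon>>0. \<forall>\<^sub>F j in sequentially. \<forall>z.
                 snd z \<ge> 0 \<and> z \<notin> N \<longrightarrow>
                 norm (piecewise_const (hs j) (cs j) (ts j) (U j) z - u z) < \<epsilon>"
  shows "weak_solution f u"
  proof -
  show ?thesis unfolding weak_solution_def
  proof (intro allI impI)
    fix \<phi> phx pht assume tf: "test_function \<phi> phx pht"
    show "integrable lebesgue (\<lambda>z. pht z *\<^sub>R u z + phx z *\<^sub>R f (u z)) \<and>
         integral\<^sup>L lebesgue (\<lambda>z. pht z *\<^sub>R u z + phx z *\<^sub>R f (u z)) = 0"
      by (rule core[OF p A_sum alpha hh_cons g_cons hh_lip g_lip h_pos h_lim t0 t_mono t_unbounded dt_lim scheme conv tf])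
  qed
qed

end
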